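(* Let $N\ge5$ and $2\le d\le N-2$. Then $\Lambda_{N,d}$ equals the set of $\lambda\in\mathbb{R}^{d\times(N+1)}$ satisfying (C1)–(C7) with the four inequalities $\lambda_{2,2}\le\lambda_{1,1}$, $\lambda_{1,1}\le\lambda_{1,2}$, $\lambda_{d,N-2}\le\lambda_{d,N-1}$, $\lambda_{d,N-1}\le\lambda_{d-1,N-2}$ removed; the equations (C1)–(C3) are linearly independent and cut out the affine hull of $\Lambda_{N,d}$, and each of the remaining inequalities is irredundant, i.e. the resulting system is non-redundant and its inequalities are in bijection with the facets of $\Lambda_{N,d}$.
   Context: Conditions on $\lambda\in\mathbb{R}^{d\times(N+1)}$ (rows $1\le i\le d$, columns $0\le n\le N$): (C1) $\lambda_{i,n}=0$ whenever $i>n$; (C2) $\lambda_{i,n}=N$ whenever $i<n+d-N+1$; (C3) $\sum_{i=1}^d\lambda_{i,n}=dn$ for $0<n<N$; (C4) $\lambda_{i,n}\le\lambda_{i,n+1}$ for $1\le i\le d$, $i\le n<N-d+i-1$; (C5) $\lambda_{i,n}\le\lambda_{i-1,n-1}$ for $1<i\le d$, $i\le n<N-d+i$; (C6) $\lambda_{d,d}\ge0$; (C7) $\lambda_{1,N-d}\le N$. $\Lambda_{N,d}\subseteq\mathbb{R}^{d\times(N+1)}$ is the set of real matrices satisfying $\lambda_{i,0}=0$ and $\lambda_{i,N}=N$ for all $i$, $\sum_{i=1}^d\lambda_{i,n}=dn$ for $0\le n\le N$, $\lambda_{i,n}\le\lambda_{i,n+1}$ for $1\le i\le d$, $0\le n<N$,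 and $\lambda_{i,n}\le\lambda_{i-1,n-1}$ for $1<i\le d$, $0<n\le N$. *)

theory Defs
  imports "HOL-Analysis.Analysis"
begin

text \<open>A real d x (N+1) matrix (rows 1..d, columns 0..N) is represented by a function
  x :: nat => nat => real (x i n = entry in row i, column n) that vanishes outside the
  index set {1..d} x {0..N}.\<close>

type_synonym mat = "nat \<Rightarrow> nat \<Rightarrow> real"

definition idx :: "nat \<Rightarrow> nat \<Rightarrow> (nat \<times> nat) set" where
  "idx N d = {1..d} \<times> {0..N}"

definition mat_space :: "nat \<Rightarrow> nat \<Rightarrow> mat set" where
  "mat_space N d = {x. \<forall>i n. (i, n) \<notin> idx N d \<longrightarrow> x i n = 0}"

definition Lambda :: "nat \<Rightarrow> nat \<Rightarrow> mat set" where
  "Lambda N d = {x \<in> mat_space N d.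
      (\<forall>i\<in>{1..d}. x i 0 = 0 \<and> x i N = real N)
    \<and> (\<forall>n\<in>{0..N}. (\<Sum>i=1..d. x i n) = real d * real n)
    \<and> (\<forall>i\<in>{1..d}. \<forall>n. n < N \<longrightarrow> x i n \<le> x i (n+1))
    \<and> (\<forall>i. 1 < i \<and> i \<le> d \<longrightarrow> (\<forall>n. 0 < n \<and> n \<le> N \<longrightarrow> x i n \<le> x (i-1) (n-1)))}"

text \<open>Labels of the equations (C1), (C2), (C3).  Conditions like i < n + d - N + 1
  are written without subtraction as i + N < n + d + 1.\<close>
datatype eq_label = E1 nat nat | E2 nat nat | E3 nat

definition eq_idx :: "nat \<Rightarrow> nat \<Rightarrow> eq_label set" where
  "eq_idx N d =
     {E1 i n | i n. 1 \<le> i \<and> i \<le> d \<and> n \<le> N \<and> i > n}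
   \<union> {E2 i n | i n. 1 \<le> i \<and> i \<le> d \<and> n \<le> N \<and> i + N < n + d + 1}
   \<union> {E3 n | n. 0 < n \<and> n < N}"

fun eq_holds :: "nat \<Rightarrow> nat \<Rightarrow> eq_label \<Rightarrow> mat \<Rightarrow> bool" where
  "eq_holds N d (E1 i n) x = (x i n = 0)"
| "eq_holds N d (E2 i n) x = (x i n = real N)"
| "eq_holds N d (E3 n) x = ((\<Sum>i=1..d. x i n) = real d * real n)"

fun eq_coeff :: "nat \<Rightarrow> nat \<Rightarrow> eq_label \<Rightarrow> mat" where
  "eq_coeff N d (E1 i n) = (\<lambda>j m. if (j, m) = (i, n) then 1 else 0)"
| "eq_coeff N d (E2 i n) = (\<lambda>j m. if (j, m) = (i, n) then 1 else 0)"
| "eq_coeff N d (E3 n) = (\<lambda>j m. if 1 \<le> j \<and> j \<le> d \<and> m = n then 1 else 0)"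

definition eqs_lin_indep :: "nat \<Rightarrow> nat \<Rightarrow> bool" where
  "eqs_lin_indep N d \<longleftrightarrow>
     (\<forall>c :: eq_label \<Rightarrow> real.
        (\<forall>i n. (\<Sum>e\<in>eq_idx N d. c e * eq_coeff N d e i n) = 0) \<longrightarrow> (\<forall>e\<in>eq_idx N d. c e = 0))"

text \<open>Labels of the inequalities of the reduced system: (C4) and (C5) without the four
  removed inequalities, and (C6), (C7).\<close>
datatype ineq_label = I4 nat nat | I5 nat nat | I6 | I7

definition ineq_idx :: "nat \<Rightarrow> nat \<Rightarrow> ineq_label set" where
  "ineq_idx N d =
     {I4 i n | i n. 1 \<le> i \<and> i \<le> d \<and> i \<le> n \<and> n + d + 1 < N + i
                 \<and> (i, n) \<noteq> (1, 1) \<and> (i, n) \<noteq> (d, N - 2)}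
   \<union> {I5 i n | i n. 1 < i \<and> i \<le> d \<and> i \<le> n \<and> n + d < N + i
                 \<and> (i, n) \<noteq> (2, 2) \<and> (i, n) \<noteq> (d, N - 1)}
   \<union> {I6, I7}"

fun ineq_holds :: "nat \<Rightarrow> nat \<Rightarrow> ineq_label \<Rightarrow> mat \<Rightarrow> bool" where
  "ineq_holds N d (I4 i n) x = (x i n \<le> x i (n+1))"
| "ineq_holds N d (I5 i n) x = (x i n \<le> x (i-1) (n-1))"
| "ineq_holds N d I6 x = (x d d \<ge> 0)"
| "ineq_holds N d I7 x = (x 1 (N - d) \<le> real N)"

fun ineq_tight :: "nat \<Rightarrow> nat \<Rightarrow> ineq_label \<Rightarrow> mat \<Rightarrow> bool" where
  "ineq_tight N d (I4 i n) x = (x i n = x i (n+1))"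
| "ineq_tight N d (I5 i n) x = (x i n = x (i-1) (n-1))"
| "ineq_tight N d I6 x = (x d d = 0)"
| "ineq_tight N d I7 x = (x 1 (N - d) = real N)"

definition reduced_system :: "nat \<Rightarrow> nat \<Rightarrow> mat set" where
  "reduced_system N d = {x \<in> mat_space N d.
      (\<forall>e\<in>eq_idx N d. eq_holds N d e x) \<and> (\<forall>l\<in>ineq_idx N d. ineq_holds N d l x)}"

definition mat_affine_hull :: "mat set \<Rightarrow> mat set" where
  "mat_affine_hull S = {x. \<exists>T u. finite T \<and> T \<noteq> {} \<and> T \<subseteq> S \<and> sum u T = 1
       \<and> (\<forall>i n. x i n = (\<Sum>y\<in>T. u y * y i n))}"

definition mat_aff_indep :: "mat set \<Rightarrow> bool" where
  "mat_aff_indep T \<longleftrightarrow> finite T \<and>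
     (\<forall>u. sum u T = 0 \<and> (\<forall>i n. (\<Sum>y\<in>T. u y * y i n) = 0) \<longrightarrow> (\<forall>y\<in>T. u y = 0))"

definition mat_aff_dim :: "mat set \<Rightarrow> int" where
  "mat_aff_dim S = int (Max {card T | T. T \<subseteq> S \<and> mat_aff_indep T}) - 1"

definition mat_face_of :: "nat \<Rightarrow> nat \<Rightarrow> mat set \<Rightarrow> mat set \<Rightarrow> bool" where
  "mat_face_of N d F P \<longleftrightarrow> (\<exists>(a::mat) (b::real).
      (\<forall>x\<in>P. (\<Sum>(i,n)\<in>idx N d. a i n * x i n) \<le> b)
    \<and> F = {x\<in>P. (\<Sum>(i,n)\<in>idx N d. a i n * x i n) = b})"

definition mat_facet_of :: "nat \<Rightarrow> nat \<Rightarrow> mat set \<Rightarrow> mat set \<Rightarrow> bool" where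
  "mat_facet_of N d F P \<longleftrightarrow> mat_face_of N d F P \<and> F \<noteq> {} \<and> mat_aff_dim F = mat_aff_dim P - 1"

end

theory Submission
  imports Defs "HOL-Library.Function_Algebras"
begin

section \<open>Linear algebra on matrices\<close>

definition sc :: "real \<Rightarrow> mat \<Rightarrow> mat" where "sc r x = (\<lambda>i n. r * x i n)"

lemma sc_apply[simp]: "sc r x i n = r * x i n" by (simp add: sc_def)

interpretation mv: vector_space sc
  by unfold_locales (auto simp: fun_eq_iff algebra_simps sc_def)

lemma sum_apply2: "(sum f S) i n = (\<Sum>v\<in>S. f v i n)" for f :: "'a \<Rightarrow> mat"
  by (induction S rule: infinite_finite_induct) auto

lemma aff_indep_ub:
  assumes fin: "finite B" and T: "mat_aff_indep T" and sub: "\<forall>y\<in>T. y - q \<in> mv.span B"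
  shows "card T \<le> card B + 1"
proof (cases "T = {}")
  case True then show ?thesis by simp
next
  case False
  then obtain y0 where y0: "y0 \<in> T" by auto
  have finT: "finite T" using T by (simp add: mat_aff_indep_def)
  define g where "g y = y - y0" for y :: mat
  define V where "V = g ` (T - {y0})"
  have inj: "inj_on g (T - {y0})" by (auto simp: g_def inj_on_def)
  have cardV: "card V = card T - 1" using card_image[OF inj] finT y0 by (simp add: V_def)
  have Vspan: "V \<subseteq> mv.span B"
  proof
    fix v assume "v \<in> V"
    then obtain y where y: "y \<in> T" "v = y - y0" by (auto simp: V_def g_def)
    have "(y - q) - (y0 - q) \<in> mv.span B" by (rule mv.span_diff) (use sub y y0 in auto)
    moreover have "(y - q) - (y0 - q) = v" using y by (simp add: fun_eq_iff)
    ultimately show "v \<in> mv.span B" by simp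
  qed
  have indep: "mv.independent V"
    unfolding mv.independent_explicit_finite_subsets
  proof (intro allI impI ballI)
    fix S u v assume S: "S \<subseteq> V" "finite S" and su: "(\<Sum>v\<in>S. sc (u v) v) = 0" and v: "v \<in> S"
    define S0 where "S0 = {y\<in>T - {y0}. g y \<in> S}"
    have S0sub: "S0 \<subseteq> T - {y0}" by (auto simp: S0_def)
    have SS0: "S = g ` S0" using S by (auto simp: S0_def V_def)
    have injS0: "inj_on g S0" using inj S0sub by (rule inj_on_subset)
    define w where "w y = (if y \<in> S0 then u (g y) else if y = y0 then - (\<Sum>z\<in>S0. u (g z)) else 0)" for y
    have key: "(\<Sum>y\<in>T. w y * f y) = w y0 * f y0 + (\<Sum>y\<in>S0. u (g y) * f y)" for f :: "mat \<Rightarrow> real"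
    proof -
      have "(\<Sum>y\<in>T. w y * f y) = w y0 * f y0 + (\<Sum>y\<in>T - {y0}. w y * f y)"
        using finT y0 by (simp add: sum.remove)
      also have "(\<Sum>y\<in>T - {y0}. w y * f y) = (\<Sum>y\<in>S0. w y * f y)"
        using finT S0sub by (intro sum.mono_neutral_right) (auto simp: w_def)
      also have "\<dots> = (\<Sum>y\<in>S0. u (g y) * f y)" by (intro sum.cong) (auto simp: w_def)
      finally show ?thesis .
    qed
    have y0S0: "y0 \<notin> S0" by (auto simp: S0_def)
    have w0: "w y0 = - (\<Sum>z\<in>S0. u (g z))" using y0S0 by (simp add: w_def)
    have s1: "sum w T = 0" using key[of "\<lambda>_. 1"] w0 by simp
    have s2: "(\<Sum>y\<in>T. w y * y i n) = 0" for i n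
    proof -
      have "(\<Sum>y\<in>T. w y * y i n) = w y0 * y0 i n + (\<Sum>y\<in>S0. u (g y) * y i n)"
        by (rule key)
      also have "\<dots> = (\<Sum>y\<in>S0. u (g y) * y i n) - (\<Sum>y\<in>S0. u (g y)) * y0 i n"
        using w0 by simp
      also have "\<dots> = (\<Sum>y\<in>S0. u (g y) * (y i n - y0 i n))"
        by (simp add: sum_distrib_right right_diff_distrib sum_subtractf)
      also have "\<dots> = (\<Sum>y\<in>S0. u (g y) * g y i n)" by (simp add: g_def)
      also have "\<dots> = (\<Sum>v\<in>S. u v * v i n)" unfolding SS0 by (simp add: sum.reindex[OF injS0])
      also have "\<dots> = (\<Sum>v\<in>S. sc (u v) v) i n" by (simp add: sum_apply2)
      also have "\<dots> = 0" using su by simp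
      finally show ?thesis .
    qed
    have wT: "\<forall>y\<in>T. w y = 0" using T s1 s2 unfolding mat_aff_indep_def by blast
    obtain y where y: "y \<in> S0" "v = g y" using v SS0 by auto
    have yT: "y \<in> T" using y(1) S0sub by blast
    have "w y = u (g y)" using y(1) by (simp add: w_def)
    then show "u v = 0" using wT yT y(2) by simp
  qed
  have "card V \<le> card B" using mv.independent_span_bound[OF fin indep Vspan] by simp
  then show ?thesis using cardV by simp
qed

lemma aff_indep_lb:
  assumes B: "mv.independent B" "finite B" and e: "e \<noteq> 0"
  shows "mat_aff_indep (insert q ((\<lambda>b. q + sc e b) ` B))"
    and "card (insert q ((\<lambda>b. q + sc e b) ` B)) = card B + 1"
proof -
  define h where "h = (\<lambda>b. q + sc e b)"
  have B0: "0 \<notin> B" using B(1) mv.dependent_zero by blast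
  have qn: "q \<notin> h ` B"
  proof
    assume "q \<in> h ` B"
    then obtain b where b: "b \<in> B" "q = q + sc e b" by (auto simp: h_def)
    then have "b = 0" using e by (auto simp: fun_eq_iff)
    then show False using b B0 by simp
  qed
  have inj: "inj_on h B" using e by (auto simp: inj_on_def h_def fun_eq_iff)
  have card: "card (insert q (h ` B)) = card B + 1"
    using qn inj B(2) card_image[OF inj] by simp
  then show "card (insert q ((\<lambda>b. q + sc e b) ` B)) = card B + 1" by (simp only: h_def)
  have key: "(\<Sum>y\<in>insert q (h ` B). u y * f y) = u q * f q + (\<Sum>b\<in>B. u (h b) * f (h b))" for u f
  proof -
    have "(\<Sum>y\<in>insert q (h ` B). u y * f y) = u q * f q + (\<Sum>y\<in>h ` B. u y * f y)"
      using qn B(2) by (simp add: sum.insert)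
    also have "(\<Sum>y\<in>h ` B. u y * f y) = (\<Sum>b\<in>B. u (h b) * f (h b))"
      using sum.reindex[OF inj, of "\<lambda>y. u y * f y"] by simp
    finally show ?thesis .
  qed
  have "mat_aff_indep (insert q (h ` B))"
    unfolding mat_aff_indep_def
  proof (intro conjI allI impI)
    show "finite (insert q (h ` B))" using B(2) by simp
    fix u assume u: "sum u (insert q (h ` B)) = 0 \<and> (\<forall>i n. (\<Sum>y\<in>insert q (h ` B). u y * y i n) = 0)"
    have "sum u (insert q (h ` B)) = u q + (\<Sum>b\<in>B. u (h b))" using key[of u "\<lambda>_. 1"] by simp
    then have uq: "u q = - (\<Sum>b\<in>B. u (h b))" using u by simp
    have z: "(\<Sum>b\<in>B. u (h b) * b i n) = 0" for i n
    proof -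
      have "0 = u q * q i n + (\<Sum>b\<in>B. u (h b) * h b i n)"
        using u key[of u "\<lambda>y. y i n"] by simp
      also have "(\<Sum>b\<in>B. u (h b) * h b i n) = (\<Sum>b\<in>B. u (h b) * q i n + e * (u (h b) * b i n))"
        by (rule sum.cong) (simp_all add: h_def distrib_left)
      also have "\<dots> = (\<Sum>b\<in>B. u (h b)) * q i n + e * (\<Sum>b\<in>B. u (h b) * b i n)"
        by (simp add: sum.distrib sum_distrib_right sum_distrib_left)
      finally have "0 = e * (\<Sum>b\<in>B. u (h b) * b i n)" using uq by simp
      then show ?thesis using e by simp
    qed
    have zs: "(\<Sum>b\<in>B. sc (u (h b)) b) = 0" using z by (simp add: fun_eq_iff sum_apply2)
    have I: "\<And>S w. S \<subseteq> B \<Longrightarrow> finite S \<Longrightarrow> (\<Sum>v\<in>S. sc (w v) v) = 0 \<Longrightarrow> \<forall>v\<in>S. w v = 0"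
      using B(1) unfolding mv.independent_explicit_finite_subsets by blast
    have hb: "\<forall>b\<in>B. u (h b) = 0" using I[of B "\<lambda>b. u (h b)"] B(2) zs by simp
    then have "u q = 0" using uq by simp
    then show "\<forall>y\<in>insert q (h ` B). u y = 0" using hb by auto
  qed
  then show "mat_aff_indep (insert q ((\<lambda>b. q + sc e b) ` B))" by (simp only: h_def)
qed

lemma aff_dim_eq:
  assumes fin: "finite B" and ind: "mv.independent B" and sub: "\<forall>y\<in>S. y - q \<in> mv.span B"
    and q: "q \<in> S" and e: "e \<noteq> 0" and qb: "\<forall>b\<in>B. q + sc e b \<in> S"
  shows "mat_aff_dim S = int (card B)"
proof -
  define C where "C = {card T |T. T \<subseteq> S \<and> mat_aff_indep T}"
  have ub: "c \<le> card B + 1" if cC: "c \<in> C" for c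
  proof -
    obtain T where T: "c = card T" "T \<subseteq> S" "mat_aff_indep T" using cC by (auto simp: C_def)
    then show ?thesis using aff_indep_ub[OF fin T(3), of q] sub by auto
  qed
  have finC: "finite C" using ub by (meson finite_nat_set_iff_bounded_le)
  have "\<exists>T. card B + 1 = card T \<and> T \<subseteq> S \<and> mat_aff_indep T"
    using aff_indep_lb[OF ind fin e, of q] q qb by (intro exI[of _ "insert q ((\<lambda>b. q + sc e b) ` B)"]) auto
  then have "card B + 1 \<in> C" by (simp add: C_def)
  then have "Max C = card B + 1" using ub finC by (intro Max_eqI) auto
  then show ?thesis unfolding mat_aff_dim_def C_def[symmetric] by simp
qed

lemma aff_dim_le:
  assumes fin: "finite B" and sub: "\<forall>y\<in>S. y - q \<in> mv.span B" and ne: "S \<noteq> {}"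
  shows "mat_aff_dim S \<le> int (card B)"
proof -
  define C where "C = {card T |T. T \<subseteq> S \<and> mat_aff_indep T}"
  have ub: "c \<le> card B + 1" if cC: "c \<in> C" for c
  proof -
    obtain T where T: "c = card T" "T \<subseteq> S" "mat_aff_indep T" using cC by (auto simp: C_def)
    then show ?thesis using aff_indep_ub[OF fin T(3), of q] sub by auto
  qed
  have finC: "finite C" using ub by (meson finite_nat_set_iff_bounded_le)
  obtain y where y: "y \<in> S" using ne by auto
  have "mat_aff_indep {y}" by (simp add: mat_aff_indep_def)
  then have "1 \<in> C" using y unfolding C_def by force
  then have "Max C \<le> card B + 1" using ub finC by (intro Max.boundedI) auto
  then show ?thesis unfolding mat_aff_dim_def C_def[symmetric] by simp
qed

lemma ker_basis:
  assumes U: "mv.subspace U" and B: "B \<subseteq> U" "mv.independent B" "U \<subseteq> mv.span B" "finite B"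
    and phi_add: "\<And>x y. phi (x + y) = phi x + phi y" and phi_sc: "\<And>c x. phi (sc c x) = c * phi x"
    and uz: "uz \<in> U" "phi uz \<noteq> 0"
  obtains B' where "B' \<subseteq> U \<inter> {v. phi v = 0}" "mv.independent B'" "U \<inter> {v. phi v = 0} \<subseteq> mv.span B'"
    "finite B'" "card B' + 1 = card B"
proof -
  define V where "V = U \<inter> {v. phi v = 0}"
  have phi0: "phi 0 = 0" using phi_sc[of 0 0] by (simp add: sc_def zero_fun_def)
  have phi_diff: "phi (x - y) = phi x - phi y" for x y
  proof -
    have eq: "x - y = x + sc (-1) y" by (simp add: fun_eq_iff)
    have "phi (x - y) = phi (x + sc (-1) y)" using eq by (rule arg_cong)
    also have "\<dots> = phi x + phi (sc (-1) y)" by (rule phi_add)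
    also have "\<dots> = phi x - phi y" using phi_sc[of "-1" y] by simp
    finally show ?thesis .
  qed
  have subV: "mv.subspace V"
    using U unfolding mv.subspace_def V_def by (auto simp: phi0 phi_add phi_sc)
  obtain B' where B': "B' \<subseteq> V" "mv.independent B'" "V \<subseteq> mv.span B'"
    using mv.maximal_independent_subset[of V] by blast
  have B'U: "B' \<subseteq> U" using B' by (auto simp: V_def)
  have "finite B' \<and> card B' \<le> card B"
    using mv.independent_span_bound[OF B(4) B'(2)] B'U B(3) by blast
  then have finB': "finite B'" by simp
  have spanV: "mv.span B' \<subseteq> V" using mv.span_minimal[OF B'(1) subV] .
  have u0n: "uz \<notin> mv.span B'" using spanV uz by (auto simp: V_def)
  have ind2: "mv.independent (insert uz B')" using mv.independent_insertI[OF u0n B'(2)] .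
  have "insert uz B' \<subseteq> mv.span B" using B'U uz B(3) by auto
  then have c1: "card (insert uz B') \<le> card B" using mv.independent_span_bound[OF B(4) ind2] by blast
  have u0B': "uz \<notin> B'" using u0n mv.span_superset by blast
  have "U \<subseteq> mv.span (insert uz B')"
  proof
    fix u assume u: "u \<in> U"
    have "u - sc (phi u / phi uz) uz \<in> V"
    proof -
      have "sc (- (phi u / phi uz)) uz \<in> U" using U uz unfolding mv.subspace_def by blast
      then have "u + sc (- (phi u / phi uz)) uz \<in> U" using U u unfolding mv.subspace_def by blast
      moreover have "u + sc (- (phi u / phi uz)) uz = u - sc (phi u / phi uz) uz"
        by (simp add: fun_eq_iff)
      ultimately have "u - sc (phi u / phi uz) uz \<in> U" by simp
      moreover have "phi (u - sc (phi u / phi uz) uz) = 0" using uz by (simp add: phi_diff phi_sc)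
      ultimately show ?thesis by (simp add: V_def)
    qed
    then have "u - sc (phi u / phi uz) uz \<in> mv.span B'" using B'(3) by blast
    then show "u \<in> mv.span (insert uz B')" using mv.span_breakdown_eq by blast
  qed
  then have "B \<subseteq> mv.span (insert uz B')" using B(1) by blast
  then have c2: "card B \<le> card (insert uz B')"
    using mv.independent_span_bound[of "insert uz B'" B] finB' B(2) by auto
  show ?thesis
    by (rule that[of B']) (use B' finB' c1 c2 u0B' in \<open>auto simp: V_def\<close>)
qed




definition free :: "nat \<Rightarrow> nat \<Rightarrow> nat \<Rightarrow> nat \<Rightarrow> bool" where
  "free N d i n \<longleftrightarrow> 1 \<le> i \<and> i \<le> d \<and> i \<le> n \<and> n + d < N + i"

definition Aset :: "nat \<Rightarrow> nat \<Rightarrow> mat set" where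
  "Aset N d = {x \<in> mat_space N d. \<forall>e\<in>eq_idx N d. eq_holds N d e x}"


locale setting =
  fixes N d :: nat
  assumes N5: "5 \<le> N" and d2: "2 \<le> d" and dN: "d \<le> N - 2"
begin

lemma E1_mem: "E1 i n \<in> eq_idx N d \<longleftrightarrow> 1 \<le> i \<and> i \<le> d \<and> n \<le> N \<and> n < i"
  by (auto simp: eq_idx_def)
lemma E2_mem: "E2 i n \<in> eq_idx N d \<longleftrightarrow> 1 \<le> i \<and> i \<le> d \<and> n \<le> N \<and> i + N < n + d + 1"
  by (auto simp: eq_idx_def)
lemma E3_mem: "E3 n \<in> eq_idx N d \<longleftrightarrow> 0 < n \<and> n < N"
  by (auto simp: eq_idx_def)

lemma free_rows: "{i\<in>{1..d}. free N d i n} = {n + d - N<..min n d}"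
  using dN by (auto simp: free_def)

lemma e2_rows: "n \<le> N \<Longrightarrow> {i\<in>{1..d}. i + N < n + d + 1} = {1..n + d - N}"
  using dN by auto

lemma sum_if_free: "(\<Sum>i=1..d. if free N d i n then f i else 0) = (\<Sum>i\<in>{n + d - N<..min n d}. f i)"
proof -
  have "(\<Sum>i=1..d. if free N d i n then f i else 0) = sum f {i\<in>{1..d}. free N d i n}"
    by (rule sum.inter_filter[symmetric]) simp
  also have "\<dots> = sum f {n + d - N<..min n d}" by (simp only: free_rows)
  finally show ?thesis .
qed

lemma sum_if_e2: "n \<le> N \<Longrightarrow> (\<Sum>i=1..d. if i + N < n + d + 1 then (c::real) else 0) = real (n + d - N) * c"
proof -
  assume n: "n \<le> N"
  have "(\<Sum>i=1..d. if i + N < n + d + 1 then c else 0) = (\<Sum>i\<in>{i\<in>{1..d}. i + N < n + d + 1}. c)"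
    by (rule sum.inter_filter[symmetric]) simp
  also have "\<dots> = (\<Sum>i\<in>{1..n + d - N}. c)" by (simp only: e2_rows[OF n])
  finally show ?thesis by simp
qed

lemma colsum:
  assumes x: "x \<in> Aset N d" and n: "0 < n" "n < N"
  shows "(\<Sum>i\<in>{n + d - N<..min n d}. x i n) = real d * real n - real (n + d - N) * real N"
proof -
  have E3: "(\<Sum>i=1..d. x i n) = real d * real n"
    using x n unfolding Aset_def by (auto simp: E3_mem dest!: bspec[of _ _ "E3 n"])
  have eq: "x i n = (if free N d i n then x i n else 0) + (if i + N < n + d + 1 then real N else 0)"
    if i: "i \<in> {1..d}" for i
  proof (cases "n < i")
    case True
    then have "E1 i n \<in> eq_idx N d" using i n by (simp add: E1_mem)
    then have "x i n = 0" using x unfolding Aset_def by fastforce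
    moreover have "\<not> free N d i n" using True by (simp add: free_def)
    moreover have "\<not> i + N < n + d + 1" using True dN N5 by simp
    ultimately show ?thesis by simp
  next
    case False
    show ?thesis
    proof (cases "i + N < n + d + 1")
      case True
      then have "E2 i n \<in> eq_idx N d" using i n by (simp add: E2_mem)
      then have "x i n = real N" using x unfolding Aset_def by fastforce
      moreover have "\<not> free N d i n" using True by (simp add: free_def)
      ultimately show ?thesis using True by simp
    next
      case False2: False
      then have "free N d i n" using False i by (auto simp: free_def)
      then show ?thesis using False2 by simp
    qed
  qed
  have "(\<Sum>i=1..d. x i n) = (\<Sum>i=1..d. if free N d i n then x i n else 0)
        + (\<Sum>i=1..d. if i + N < n + d + 1 then real N else 0)"
    by (subst sum.distrib[symmetric]) (rule sum.cong, simp_all add: eq)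
  also have "(\<Sum>i=1..d. if i + N < n + d + 1 then real N else 0) = real (n + d - N) * real N"
    using n sum_if_e2 by simp
  finally show ?thesis using E3 sum_if_free[of n "\<lambda>i. x i n"] by simp
qed

end

fun slk :: "nat \<Rightarrow> nat \<Rightarrow> ineq_label \<Rightarrow> mat \<Rightarrow> real" where
  "slk N d (I4 i n) x = x i (n+1) - x i n"
| "slk N d (I5 i n) x = x (i-1) (n-1) - x i n"
| "slk N d I6 x = x d d"
| "slk N d I7 x = real N - x 1 (N-d)"

fun slin :: "nat \<Rightarrow> nat \<Rightarrow> ineq_label \<Rightarrow> mat \<Rightarrow> real" where
  "slin N d (I4 i n) x = x i (n+1) - x i n"
| "slin N d (I5 i n) x = x (i-1) (n-1) - x i n"
| "slin N d I6 x = x d d"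
| "slin N d I7 x = - x 1 (N-d)"

lemma holds_slk: "ineq_holds N d l x \<longleftrightarrow> 0 \<le> slk N d l x"
  by (cases l) auto
lemma tight_slk: "ineq_tight N d l x \<longleftrightarrow> slk N d l x = 0"
  by (cases l) auto

lemma reduced_iff: "x \<in> reduced_system N d \<longleftrightarrow> x \<in> Aset N d \<and> (\<forall>l\<in>ineq_idx N d. 0 \<le> slk N d l x)"
  by (auto simp: reduced_system_def Aset_def holds_slk)

lemma I4_mem: "I4 i n \<in> ineq_idx N d \<longleftrightarrow> 1 \<le> i \<and> i \<le> d \<and> i \<le> n \<and> n + d + 1 < N + i
                 \<and> (i, n) \<noteq> (1, 1) \<and> (i, n) \<noteq> (d, N - 2)"
  by (auto simp: ineq_idx_def)
lemma I5_mem: "I5 i n \<in> ineq_idx N d \<longleftrightarrow> 1 < i \<and> i \<le> d \<and> i \<le> n \<and> n + d < N + i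
                 \<and> (i, n) \<noteq> (2, 2) \<and> (i, n) \<noteq> (d, N - 1)"
  by (auto simp: ineq_idx_def)
lemma I6_mem: "I6 \<in> ineq_idx N d" and I7_mem: "I7 \<in> ineq_idx N d"
  by (auto simp: ineq_idx_def)

context setting begin

section \<open>Lambda is contained in the reduced system\<close>

lemma Lam_diag1:
  assumes x: "x \<in> Lambda N d" and "1 < i" "i \<le> d" "0 < n" "n \<le> N"
  shows "x i n \<le> x (i-1) (n-1)"
  using assms unfolding Lambda_def by blast

lemma Lam_row1:
  assumes x: "x \<in> Lambda N d" and "1 \<le> i" "i \<le> d" "n < N"
  shows "x i n \<le> x i (n+1)"
  using assms unfolding Lambda_def by auto

lemma Lam_row:
  assumes x: "x \<in> Lambda N d" and i: "i \<in> {1..d}" and nm: "n \<le> m" "m \<le> N"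
  shows "x i n \<le> x i m"
  using nm
proof (induction m)
  case 0 then show ?case by simp
next
  case (Suc m)
  show ?case
  proof (cases "n = Suc m")
    case True then show ?thesis by simp
  next
    case False
    then have "x i n \<le> x i m" using Suc by simp
    also have "x i m \<le> x i (m+1)" using Lam_row1[OF x, of i m] i Suc.prems by auto
    finally show ?thesis by simp
  qed
qed

lemma Lam_diag:
  assumes x: "x \<in> Lambda N d" and i: "1 \<le> i" "i + t \<le> d" and n: "n + t \<le> N"
  shows "x (i+t) (n+t) \<le> x i n"
  using i n
proof (induction t)
  case 0 then show ?case by simp
next
  case (Suc t)
  have "x (i + Suc t) (n + Suc t) \<le> x (i + Suc t - 1) (n + Suc t - 1)"
    using Lam_diag1[OF x, of "i + Suc t" "n + Suc t"] Suc.prems by auto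
  also have "\<dots> = x (i+t) (n+t)" by simp
  also have "\<dots> \<le> x i n" using Suc by simp
  finally show ?case .
qed

lemma Lam_vals:
  assumes x: "x \<in> Lambda N d"
  shows "\<And>i. i \<in> {1..d} \<Longrightarrow> x i 0 = 0" "\<And>i. i \<in> {1..d} \<Longrightarrow> x i N = real N"
  using x unfolding Lambda_def by auto

lemma Lam_E1:
  assumes x: "x \<in> Lambda N d" and "1 \<le> i" "i \<le> d" "n < i"
  shows "x i n = 0"
proof -
  have "x i n \<ge> x i 0" using Lam_row[OF x, of i 0 n] assms dN by auto
  moreover have "x ((i - n) + n) (0 + n) \<le> x (i - n) 0" using Lam_diag[OF x, of "i-n" n 0] assms dN by auto
  moreover have "x (i-n) 0 = 0" by (rule Lam_vals(1)[OF x]) (use assms in auto)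
  moreover have "x i 0 = 0" using Lam_vals(1)[OF x, of "i"] assms by auto
  ultimately show ?thesis using assms by auto
qed

lemma Lam_E2:
  assumes x: "x \<in> Lambda N d" and "1 \<le> i" "i \<le> d" "n \<le> N" "i + N < n + d + 1"
  shows "x i n = real N"
proof -
  have "x i n \<le> x i N" using Lam_row[OF x, of i n N] assms by auto
  moreover have "x (i + (N - n)) (n + (N - n)) \<le> x i n" using Lam_diag[OF x, of i "N-n" n] assms by auto
  moreover have "x (i + (N - n)) N = real N" by (rule Lam_vals(2)[OF x]) (use assms in auto)
  moreover have "x i N = real N" using Lam_vals(2)[OF x, of "i"] assms by auto
  ultimately show ?thesis using assms by auto
qed

lemma Lam_sub: "Lambda N d \<subseteq> reduced_system N d"
proof
  fix x assume x: "x \<in> Lambda N d"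
  have ms: "x \<in> mat_space N d" using x unfolding Lambda_def by auto
  have eqs: "eq_holds N d e x" if e: "e \<in> eq_idx N d" for e
  proof (cases e)
    case (E1 i n) then show ?thesis using e Lam_E1[OF x] by (auto simp: E1_mem)
  next
    case (E2 i n) then show ?thesis using e Lam_E2[OF x] by (auto simp: E2_mem)
  next
    case (E3 n) then show ?thesis using e x unfolding Lambda_def by (auto simp: E3_mem)
  qed
  have ineqs: "0 \<le> slk N d l x" if l: "l \<in> ineq_idx N d" for l
  proof (cases l)
    case (I4 i n) then show ?thesis using l x unfolding Lambda_def by (auto simp: I4_mem)
  next
    case (I5 i n) then show ?thesis using l x unfolding Lambda_def by (auto simp: I5_mem)
  next
    case I6 then show ?thesis using Lam_row[OF x, of d 0 d] Lam_vals[OF x] d2 dN by auto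
  next
    case I7 then show ?thesis using Lam_row[OF x, of 1 "N-d" N] Lam_vals[OF x] d2 dN by auto
  qed
  show "x \<in> reduced_system N d" using ms eqs ineqs by (simp add: reduced_iff Aset_def)
qed


section \<open>The reduced system is contained in Lambda\<close>

lemma red_A: "x \<in> reduced_system N d \<Longrightarrow> x \<in> Aset N d"
  by (simp add: reduced_iff)
lemma red_slk: "x \<in> reduced_system N d \<Longrightarrow> l \<in> ineq_idx N d \<Longrightarrow> 0 \<le> slk N d l x"
  by (simp add: reduced_iff)

lemma A_E1: assumes "x \<in> Aset N d" "1 \<le> i" "i \<le> d" "n \<le> N" "n < i" shows "x i n = 0"
proof -
  have "E1 i n \<in> eq_idx N d" using assms by (simp add: E1_mem)
  then show ?thesis using assms(1) unfolding Aset_def by fastforce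
qed
lemma A_E2: assumes "x \<in> Aset N d" "1 \<le> i" "i \<le> d" "n \<le> N" "i + N < n + d + 1" shows "x i n = real N"
proof -
  have "E2 i n \<in> eq_idx N d" using assms by (simp add: E2_mem)
  then show ?thesis using assms(1) unfolding Aset_def by fastforce
qed
lemma A_E3: assumes "x \<in> Aset N d" "0 < n" "n < N" shows "(\<Sum>i=1..d. x i n) = real d * real n"
proof -
  have "E3 n \<in> eq_idx N d" using assms by (simp add: E3_mem)
  then show ?thesis using assms(1) unfolding Aset_def by fastforce
qed
lemma A_ms: "x \<in> Aset N d \<Longrightarrow> x \<in> mat_space N d"
  unfolding Aset_def by auto

lemma red_I4: "x \<in> reduced_system N d \<Longrightarrow> I4 i n \<in> ineq_idx N d \<Longrightarrow> x i n \<le> x i (n+1)"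
  using red_slk[of x "I4 i n"] by simp
lemma red_I5: "x \<in> reduced_system N d \<Longrightarrow> I5 i n \<in> ineq_idx N d \<Longrightarrow> x i n \<le> x (i-1) (n-1)"
  using red_slk[of x "I5 i n"] by simp

lemma corner1: assumes "x \<in> Aset N d" shows "x 1 1 = real d"
proof -
  have a: "1 + d - N = 0" "min 1 d = 1" using dN N5 d2 by auto
  have b: "{0<..1::nat} = {1}" by auto
  show ?thesis using colsum[OF assms, of 1, unfolded a b] N5 by simp
qed

lemma corner2: assumes "x \<in> Aset N d" shows "x d (N-1) = real N - real d"
proof -
  have a: "N - 1 + d - N = d - 1" "min (N-1) d = d" using dN N5 d2 by auto
  have b: "{d-1<..d} = {d}" using d2 by auto
  have "x d (N-1) = real d * real (N-1) - real (d-1) * real N"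
    using colsum[OF assms, of "N-1", unfolded a b] N5 by simp
  then show ?thesis using N5 d2 by (simp add: of_nat_diff algebra_simps)
qed

lemma col2: assumes "x \<in> Aset N d" shows "x 1 2 + x 2 2 = 2 * real d"
proof -
  have a: "2 + d - N = 0" "min 2 d = 2" using dN N5 d2 by auto
  have b: "{0<..2::nat} = {1,2}" by auto
  show ?thesis using colsum[OF assms, of 2, unfolded a b] N5 by simp
qed

lemma colN2: assumes "x \<in> Aset N d" shows "x (d-1) (N-2) + x d (N-2) = 2 * real N - 2 * real d"
proof -
  have a: "N - 2 + d - N = d - 2" "min (N-2) d = d" using dN N5 d2 by auto
  have b: "{d-2<..d} = {d-1, d}" using d2 by auto
  have c: "d - 1 \<noteq> d" using d2 by auto
  have "x (d-1) (N-2) + x d (N-2) = real d * real (N-2) - real (d-2) * real N"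
    using colsum[OF assms, of "N-2", unfolded a b] N5 c by simp
  then show ?thesis using N5 d2 by (simp add: of_nat_diff algebra_simps)
qed

lemma red_22: assumes x: "x \<in> reduced_system N d" shows "x 2 2 \<le> real d" "real d \<le> x 1 2"
proof -
  have m1: "I4 2 2 \<in> ineq_idx N d" using dN N5 d2 by (auto simp: I4_mem)
  have m2: "I5 2 3 \<in> ineq_idx N d" using dN N5 d2 by (auto simp: I5_mem)
  have "x 2 2 \<le> x 2 (2+1)" using red_I4[OF x m1] by simp
  also have "\<dots> \<le> x (2-1) (3-1)" using red_I5[OF x m2] by simp
  finally have "x 2 2 \<le> x 1 2" by simp
  then show "x 2 2 \<le> real d" "real d \<le> x 1 2" using col2[OF red_A[OF x]] by auto
qed

lemma red_dN2: assumes x: "x \<in> reduced_system N d"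
  shows "x d (N-2) \<le> real N - real d" "real N - real d \<le> x (d-1) (N-2)"
proof -
  have m1: "I5 d (N-2) \<in> ineq_idx N d" using dN N5 d2 by (auto simp: I5_mem)
  have m2: "I4 (d-1) (N-2-1) \<in> ineq_idx N d" using dN N5 d2 by (auto simp: I4_mem)
  have "x d (N-2) \<le> x (d-1) (N-2-1)" using red_I5[OF x m1] by simp
  also have "\<dots> \<le> x (d-1) (N-2-1+1)" using red_I4[OF x m2] by simp
  also have "N-2-1+1 = N-2" using N5 by simp
  finally have "x d (N-2) \<le> x (d-1) (N-2)" by simp
  then show "x d (N-2) \<le> real N - real d" "real N - real d \<le> x (d-1) (N-2)"
    using colN2[OF red_A[OF x]] by auto
qed

lemma red_lower:
  assumes x: "x \<in> reduced_system N d"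
  shows "free N d i n \<Longrightarrow> 0 \<le> x i n"
proof (induction "(d - i) + (n - i)" arbitrary: i n rule: less_induct)
  case less
  note fr = less.prems[unfolded free_def]
  show ?case
  proof (cases "(i,n) = (d,d) \<or> (i,n) = (1,1) \<or> (i,n) = (d,N-1)")
    case True
    then show ?thesis using red_slk[OF x I6_mem] corner1[OF red_A[OF x]] corner2[OF red_A[OF x]] dN by auto
  next
    case nb: False
    show ?thesis
    proof (cases "i < n \<and> (i,n) \<noteq> (1,2)")
      case True
      have ms: "(d - i) + (n - 1 - i) < (d - i) + (n - i)" using True fr by arith
      have "free N d i (n-1)" using fr True by (auto simp: free_def)
      then have "0 \<le> x i (n-1)" using less.hyps[OF ms] by simp
      also have "x i (n-1) \<le> x i (n-1+1)"
      proof (rule red_I4[OF x])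
        show "I4 i (n-1) \<in> ineq_idx N d" using fr True nb unfolding I4_mem prod.inject by auto
      qed
      finally show ?thesis using True by simp
    next
      case False
      have id: "i < d" using False nb fr dN N5 d2 by auto
      have "0 \<le> x (i+1) (n+1)" using less.hyps[of "i+1" "n+1"] fr id by (auto simp: free_def)
      also have "x (i+1) (n+1) \<le> x (i+1-1) (n+1-1)"
      proof (rule red_I5[OF x])
        show "I5 (i+1) (n+1) \<in> ineq_idx N d" using fr id False nb dN N5 d2 unfolding I5_mem prod.inject by auto
      qed
      finally show ?thesis by simp
    qed
  qed
qed

lemma red_upper:
  assumes x: "x \<in> reduced_system N d"
  shows "free N d i n \<Longrightarrow> x i n \<le> real N"
proof (induction "i + (N + i - n)" arbitrary: i n rule: less_induct)
  case less
  note fr = less.prems[unfolded free_def]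
  show ?case
  proof (cases "(i,n) = (1,N-d) \<or> (i,n) = (1,1) \<or> (i,n) = (d,N-1)")
    case True
    then show ?thesis using red_slk[OF x I7_mem] corner1[OF red_A[OF x]] corner2[OF red_A[OF x]] dN by auto
  next
    case nb: False
    show ?thesis
    proof (cases "n + d + 1 < N + i \<and> (i,n) \<noteq> (d,N-2)")
      case True
      have "x i n \<le> x i (n+1)"
      proof (rule red_I4[OF x])
        show "I4 i n \<in> ineq_idx N d" using fr True nb unfolding I4_mem prod.inject by auto
      qed
      also have "x i (n+1) \<le> real N" using less.hyps[of i "n+1"] fr True by (auto simp: free_def)
      finally show ?thesis .
    next
      case False
      have i2: "2 \<le> i" using False nb fr dN N5 d2 by auto
      have h1: "x i n \<le> x (i-1) (n-1)"
      proof (rule red_I5[OF x])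
        show "I5 i n \<in> ineq_idx N d" using fr i2 False nb dN N5 unfolding I5_mem prod.inject by auto
      qed
      have ms: "(i-1) + (N + (i-1) - (n-1)) < i + (N + i - n)" using fr i2 by arith
      have "free N d (i-1) (n-1)" using fr i2 by (auto simp: free_def)
      then have "x (i-1) (n-1) \<le> real N" using less.hyps[OF ms] by simp
      then show ?thesis using h1 by simp
    qed
  qed
qed

lemma red_sub: "reduced_system N d \<subseteq> Lambda N d"
proof
  fix x assume x: "x \<in> reduced_system N d"
  have A: "x \<in> Aset N d" using red_A[OF x] .
  have v0: "x i 0 = 0" if "i \<in> {1..d}" for i using A_E1[OF A, of i 0] that by auto
  have vN: "x i N = real N" if "i \<in> {1..d}" for i using A_E2[OF A, of i N] that by auto
  have cols: "(\<Sum>i=1..d. x i n) = real d * real n" if nn: "n \<in> {0..N}" for n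
  proof -
    consider "n = 0" | "n = N" | "0 < n \<and> n < N" using nn by fastforce
    then show ?thesis
    proof cases
      case 1 then show ?thesis using v0 by simp
    next
      case 2 then show ?thesis using vN by simp
    next
      case 3 then show ?thesis using A_E3[OF A] by simp
    qed
  qed
  have rows: "x i n \<le> x i (n+1)" if i: "i \<in> {1..d}" and n: "n < N" for i n
  proof -
    consider "n + 1 < i" | "n + 1 = i" | "i \<le> n \<and> n + d + 1 < N + i" | "i \<le> n \<and> n + d + 1 = N + i"
      | "i \<le> n \<and> N + i < n + d + 1" by linarith
    then show ?thesis
    proof cases
      case 1
      have "x i n = 0" by (rule A_E1[OF A]) (use i n 1 in auto)
      moreover have "x i (n+1) = 0" by (rule A_E1[OF A]) (use i n 1 in auto)
      ultimately show ?thesis by simp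
    next
      case 2
      have "x i n = 0" by (rule A_E1[OF A]) (use i n 2 in auto)
      moreover have "0 \<le> x i (n+1)" by (rule red_lower[OF x]) (use i n 2 dN N5 in \<open>auto simp: free_def\<close>)
      ultimately show ?thesis by simp
    next
      case 3
      consider "(i,n) = (1,1)" | "(i,n) = (d,N-2)" | "(i,n) \<noteq> (1,1) \<and> (i,n) \<noteq> (d,N-2)" by blast
      then show ?thesis
      proof cases
        case 1 then show ?thesis using red_22[OF x] corner1[OF A] by (auto simp: numeral_2_eq_2)
      next
        case 2
        have "N - 2 + 1 = N - 1" using N5 by simp
        then show ?thesis using 2 red_dN2[OF x] corner2[OF A] by auto
      next
        case 3
        have "I4 i n \<in> ineq_idx N d" using 3 i n \<open>i \<le> n \<and> n + d + 1 < N + i\<close>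
          unfolding I4_mem prod.inject by auto
        then show ?thesis using red_I4[OF x] by blast
      qed
    next
      case 4
      have "x i n \<le> real N" by (rule red_upper[OF x]) (use i n 4 in \<open>auto simp: free_def\<close>)
      moreover have "x i (n+1) = real N" by (rule A_E2[OF A]) (use i n 4 in auto)
      ultimately show ?thesis by simp
    next
      case 5
      have "x i n = real N" by (rule A_E2[OF A]) (use i n 5 in auto)
      moreover have "x i (n+1) = real N" by (rule A_E2[OF A]) (use i n 5 in auto)
      ultimately show ?thesis by simp
    qed
  qed
  have diags: "x i n \<le> x (i-1) (n-1)" if i: "1 < i" "i \<le> d" and n: "0 < n" "n \<le> N" for i n
  proof -
    consider "n < i" | "i \<le> n \<and> n + d < N + i" | "i \<le> n \<and> N + i \<le> n + d" by linarith
    then show ?thesis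
    proof cases
      case 1
      have "x i n = 0" by (rule A_E1[OF A]) (use i n 1 in auto)
      moreover have "x (i-1) (n-1) = 0" by (rule A_E1[OF A]) (use i n 1 in auto)
      ultimately show ?thesis by simp
    next
      case 2
      consider "(i,n) = (2,2)" | "(i,n) = (d,N-1)" | "(i,n) \<noteq> (2,2) \<and> (i,n) \<noteq> (d,N-1)" by blast
      then show ?thesis
      proof cases
        case 1 then show ?thesis using red_22[OF x] corner1[OF A] by auto
      next
        case 2
        have "N - 1 - 1 = N - 2" by simp
        then show ?thesis using 2 red_dN2[OF x] corner2[OF A] by auto
      next
        case 3
        have "I5 i n \<in> ineq_idx N d" using 3 i n \<open>i \<le> n \<and> n + d < N + i\<close>
          unfolding I5_mem prod.inject by auto
        then show ?thesis using red_I5[OF x] by blast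
      qed
    next
      case 3
      have "x i n = real N" by (rule A_E2[OF A]) (use i n 3 in auto)
      moreover have "x (i-1) (n-1) = real N" by (rule A_E2[OF A]) (use i n 3 in auto)
      ultimately show ?thesis by simp
    qed
  qed
  show "x \<in> Lambda N d" unfolding Lambda_def using A_ms[OF A] v0 vN cols rows diags by blast
qed

lemma Lam_eq: "Lambda N d = reduced_system N d"
  using Lam_sub red_sub by auto

end


section \<open>Affine structure\<close>

definition W0 :: "nat \<Rightarrow> nat \<Rightarrow> mat set" where
  "W0 N d = {v. (\<forall>i n. \<not> free N d i n \<longrightarrow> v i n = 0) \<and> (\<forall>n. 0 < n \<and> n < N \<longrightarrow> (\<Sum>i=1..d. v i n) = 0)}"

lemma free_idx: "free N d i n \<Longrightarrow> (i, n) \<in> idx N d"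
  by (auto simp: free_def idx_def)

lemma A_I:
  assumes "x \<in> mat_space N d"
    and "\<And>i n. 1 \<le> i \<Longrightarrow> i \<le> d \<Longrightarrow> n \<le> N \<Longrightarrow> n < i \<Longrightarrow> x i n = 0"
    and "\<And>i n. 1 \<le> i \<Longrightarrow> i \<le> d \<Longrightarrow> n \<le> N \<Longrightarrow> i + N < n + d + 1 \<Longrightarrow> x i n = real N"
    and "\<And>n. 0 < n \<Longrightarrow> n < N \<Longrightarrow> (\<Sum>i=1..d. x i n) = real d * real n"
  shows "x \<in> Aset N d"
proof -
  have "eq_holds N d e x" if e: "e \<in> eq_idx N d" for e
  proof (cases e)
    case (E1 i n) then show ?thesis using e assms(2) by (auto simp: eq_idx_def)
  next
    case (E2 i n) then show ?thesis using e assms(3) by (auto simp: eq_idx_def)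
  next
    case (E3 n) then show ?thesis using e assms(4) by (auto simp: eq_idx_def)
  qed
  then show ?thesis using assms(1) by (simp add: Aset_def)
qed

lemma slk_add: "slk N d l (x + v) = slk N d l x + slin N d l v"
  by (cases l) auto
lemma slin_add: "slin N d l (x + v) = slin N d l x + slin N d l v"
  by (cases l) auto
lemma slin_sc: "slin N d l (sc c v) = c * slin N d l v"
  by (cases l) (auto simp: algebra_simps)
lemma slk_diff: "slk N d l x - slk N d l y = slin N d l (x - y)"
  by (cases l) auto
lemma slk_comb: "slk N d l (\<lambda>i n. (1 + t) * x i n - t * y i n) = (1 + t) * slk N d l x - t * slk N d l y"
  by (cases l) (auto simp: algebra_simps)
lemma abs2: "\<bar>a\<bar> \<le> r \<Longrightarrow> \<bar>b\<bar> \<le> r \<Longrightarrow> \<bar>(a::real) - b\<bar> \<le> 2 * r"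
  by (auto simp: abs_le_iff)

lemma slin_bound:
  assumes h: "\<And>i n. \<bar>v i n\<bar> \<le> r"
  shows "\<bar>slin N d l v\<bar> \<le> 2 * r"
proof -
  have r: "0 \<le> r" using h[of 0 0] by linarith
  show ?thesis
  proof (cases l)
    case (I4 i n) then show ?thesis using abs2[OF h[of i "n+1"] h[of i n]] by simp
  next
    case (I5 i n) then show ?thesis using abs2[OF h[of "i-1" "n-1"] h[of i n]] by simp
  next
    case I6 then show ?thesis using h[of d d] r by simp
  next
    case I7 then show ?thesis using h[of 1 "N-d"] r by simp
  qed
qed

lemma sum_lin: "a \<le> b \<Longrightarrow> (\<Sum>i\<in>{a<..b}. c - 2 * real i) = real (b - a) * (c - real a - real b - 1)"
proof (induction b)
  case 0 then show ?case by simp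
next
  case (Suc b)
  show ?case
  proof (cases "a = Suc b")
    case True then show ?thesis by simp
  next
    case False
    then have ab: "a \<le> b" using Suc.prems by simp
    have "{a<..Suc b} = insert (Suc b) {a<..b}" using ab by auto
    then have "(\<Sum>i\<in>{a<..Suc b}. c - 2 * real i) = (c - 2 * real (Suc b)) + (\<Sum>i\<in>{a<..b}. c - 2 * real i)"
      by simp
    also have "\<dots> = (c - 2 * real (Suc b)) + real (b - a) * (c - real a - real b - 1)" using Suc.IH ab by simp
    also have "\<dots> = real (Suc b - a) * (c - real a - real (Suc b) - 1)"
      using ab by (simp add: of_nat_diff Suc_diff_le algebra_simps)
    finally show ?thesis .
  qed
qed

definition pt :: "nat \<Rightarrow> nat \<Rightarrow> mat" where
  "pt N d = (\<lambda>i n. if free N d i n then real n + real d + 1 - 2 * real i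
     else if 1 \<le> i \<and> i \<le> d \<and> n \<le> N \<and> i + N < n + d + 1 then real N else 0)"

definition wm :: "nat \<Rightarrow> nat \<Rightarrow> mat" where
  "wm N d = (\<lambda>i n. if free N d i n then real (n + d - N) + 1 + real (min n d) - 2 * real i else 0)"

definition ind :: "nat \<times> nat \<Rightarrow> mat" where
  "ind c = (\<lambda>i n. if (i, n) = c then 1 else 0)"

context setting begin

lemma W0_sub: "mv.subspace (W0 N d)"
  unfolding mv.subspace_def W0_def
  by (auto simp: sum.distrib sum_distrib_left[symmetric])

lemma A_W0: "x \<in> Aset N d \<Longrightarrow> y \<in> Aset N d \<Longrightarrow> x - y \<in> W0 N d"
proof -
  assume x: "x \<in> Aset N d" and y: "y \<in> Aset N d"
  have "(x - y) i n = 0" if nf: "\<not> free N d i n" for i n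
  proof (cases "(i, n) \<in> idx N d")
    case False then show ?thesis using A_ms[OF x] A_ms[OF y] by (simp add: mat_space_def)
  next
    case True
    then have i: "1 \<le> i" "i \<le> d" "n \<le> N" by (auto simp: idx_def)
    then consider "n < i" | "i + N < n + d + 1" using nf by (auto simp: free_def)
    then show ?thesis
    proof cases
      case 1 then show ?thesis using A_E1[OF x] A_E1[OF y] i by simp
    next
      case 2 then show ?thesis using A_E2[OF x] A_E2[OF y] i by simp
    qed
  qed
  moreover have "(\<Sum>i=1..d. (x - y) i n) = 0" if "0 < n" "n < N" for n
    using A_E3[OF x] A_E3[OF y] that by (simp add: sum_subtractf)
  ultimately show ?thesis by (simp add: W0_def)
qed

lemma A_add_W0: "x \<in> Aset N d \<Longrightarrow> v \<in> W0 N d \<Longrightarrow> x + v \<in> Aset N d"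
proof -
  assume x: "x \<in> Aset N d" and v: "v \<in> W0 N d"
  have vz: "v i n = 0" if "\<not> free N d i n" for i n using v that by (simp add: W0_def)
  show ?thesis
  proof (rule A_I)
    show "x + v \<in> mat_space N d" using A_ms[OF x] vz free_idx by (fastforce simp: mat_space_def)
    show "(x + v) i n = 0" if "1 \<le> i" "i \<le> d" "n \<le> N" "n < i" for i n
      using A_E1[OF x] vz[of i n] that by (simp add: free_def)
    show "(x + v) i n = real N" if "1 \<le> i" "i \<le> d" "n \<le> N" "i + N < n + d + 1" for i n
      using A_E2[OF x] vz[of i n] that by (simp add: free_def)
    show "(\<Sum>i=1..d. (x + v) i n) = real d * real n" if "0 < n" "n < N" for n
      using A_E3[OF x] v that by (simp add: sum.distrib W0_def)
  qed
qed

lemma A_comb: "x \<in> Aset N d \<Longrightarrow> y \<in> Aset N d \<Longrightarrow> (\<lambda>i n. (1 + t) * x i n - t * y i n) \<in> Aset N d"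
proof -
  assume x: "x \<in> Aset N d" and y: "y \<in> Aset N d"
  have "(\<lambda>i n. (1 + t) * x i n - t * y i n) = x + sc t (x - y)" by (simp add: fun_eq_iff algebra_simps)
  moreover have "sc t (x - y) \<in> W0 N d" using W0_sub A_W0[OF x y] unfolding mv.subspace_def by blast
  ultimately show ?thesis using A_add_W0[OF x] by simp
qed

lemma pt_A: "pt N d \<in> Aset N d"
proof (rule A_I)
  show "pt N d \<in> mat_space N d" by (auto simp: mat_space_def pt_def idx_def free_def)
  show "pt N d i n = 0" if "1 \<le> i" "i \<le> d" "n \<le> N" "n < i" for i n
    using that dN N5 by (auto simp: pt_def free_def)
  show "pt N d i n = real N" if "1 \<le> i" "i \<le> d" "n \<le> N" "i + N < n + d + 1" for i n
    using that by (auto simp: pt_def free_def)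
  show "(\<Sum>i=1..d. pt N d i n) = real d * real n" if n: "0 < n" "n < N" for n
  proof -
    have eq: "pt N d i n = (if free N d i n then real n + real d + 1 - 2 * real i else 0)
        + (if i + N < n + d + 1 then real N else 0)" if "i \<in> {1..d}" for i
      using that n by (auto simp: pt_def free_def)
    have "(\<Sum>i=1..d. pt N d i n) = (\<Sum>i=1..d. if free N d i n then real n + real d + 1 - 2 * real i else 0)
        + (\<Sum>i=1..d. if i + N < n + d + 1 then real N else 0)"
      by (subst sum.distrib[symmetric]) (rule sum.cong, simp_all add: eq)
    also have "\<dots> = (\<Sum>i\<in>{n + d - N<..min n d}. (real n + real d + 1) - 2 * real i) + real (n + d - N) * real N"
      using sum_if_free sum_if_e2 n by simp
    also have "\<dots> = real (min n d - (n + d - N)) * (real n + real d + 1 - real (n + d - N) - real (min n d) - 1)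
        + real (n + d - N) * real N"
      using dN n by (subst sum_lin) auto
    also have "\<dots> = real d * real n"
    proof (cases "n + d \<le> N")
      case True
      then show ?thesis by (cases "n \<le> d") (auto simp: min_def of_nat_diff algebra_simps)
    next
      case False
      then show ?thesis using n dN by (cases "n \<le> d") (auto simp: min_def of_nat_diff algebra_simps)
    qed
    finally show ?thesis .
  qed
qed

lemma wm_W0: "wm N d \<in> W0 N d"
proof -
  have "(\<Sum>i=1..d. wm N d i n) = 0" if n: "0 < n" "n < N" for n
  proof -
    have "(\<Sum>i=1..d. wm N d i n) = (\<Sum>i\<in>{n + d - N<..min n d}. (real (n + d - N) + 1 + real (min n d)) - 2 * real i)"
      unfolding wm_def using sum_if_free by simp
    also have "\<dots> = 0" using dN n by (subst sum_lin) auto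
    finally show ?thesis .
  qed
  then show ?thesis by (auto simp: W0_def wm_def)
qed

end


definition mv4 :: "nat \<times> nat \<Rightarrow> nat \<times> nat \<Rightarrow> nat \<times> nat \<Rightarrow> nat \<times> nat \<Rightarrow> mat" where
  "mv4 c u r c' = (\<lambda>i n. ind c i n - ind u i n + ind r i n - ind c' i n)"

lemma mv4_val:
  assumes "c \<noteq> r" "u \<noteq> c'" "c \<noteq> c'" "c \<noteq> u" "r \<noteq> c'" "r \<noteq> u"
  shows "-1 \<le> mv4 c u r c' i n" "mv4 c u r c' i n \<le> 1"
    "(i, n) \<notin> {c', u} \<Longrightarrow> 0 \<le> mv4 c u r c' i n"
    "(i, n) \<notin> {c, r} \<Longrightarrow> mv4 c u r c' i n \<le> 0"
    "(i, n) = c \<Longrightarrow> mv4 c u r c' i n = 1"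
    "(i, n) = c' \<Longrightarrow> mv4 c u r c' i n = -1"
  using assms by (auto simp: mv4_def ind_def)

lemma mv4_edge:
  assumes "c \<noteq> r" "u \<noteq> c'" "c \<noteq> c'" "c \<noteq> u" "r \<noteq> c'" "r \<noteq> u"
    and "\<not> ((a1, a2) \<in> {c, r} \<and> (b1, b2) \<in> {c', u})"
  shows "-1 \<le> mv4 c u r c' b1 b2 - mv4 c u r c' a1 a2"
proof (cases "(a1, a2) \<in> {c, r}")
  case True
  then have "(b1, b2) \<notin> {c', u}" using assms(7) by blast
  then show ?thesis using mv4_val[OF assms(1-6), of b1 b2] mv4_val[OF assms(1-6), of a1 a2] by linarith
next
  case False
  then show ?thesis using mv4_val[OF assms(1-6), of b1 b2] mv4_val[OF assms(1-6), of a1 a2] by linarith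
qed

lemma ind_sum: "(\<Sum>i=1..d. ind (a, b) i n) = (if b = n \<and> 1 \<le> a \<and> a \<le> d then 1 else 0)"
  by (auto simp: ind_def sum.delta)

lemma dif_val: "a \<noteq> b \<Longrightarrow> -1 \<le> ind a i n - ind b i n \<and> ind a i n - ind b i n \<le> 1"
  by (auto simp: ind_def)

context setting begin

lemma ind_dif_W0:
  assumes "free N d a1 b" "free N d a2 b"
  shows "ind (a1, b) - ind (a2, b) \<in> W0 N d"
proof -
  have "\<not> free N d i n \<Longrightarrow> (ind (a1, b) - ind (a2, b)) i n = 0" for i n
    using assms by (auto simp: ind_def)
  moreover have "(\<Sum>i=1..d. (ind (a1, b) - ind (a2, b)) i n) = 0" for n
    using assms ind_sum[of a1 b n] ind_sum[of a2 b n] by (simp add: sum_subtractf free_def)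
  ultimately show ?thesis by (simp add: W0_def)
qed

lemma mv4_W0:
  assumes "free N d c1 n1" "free N d u1 n1" "free N d r1 n2" "free N d c'1 n2"
  shows "mv4 (c1, n1) (u1, n1) (r1, n2) (c'1, n2) \<in> W0 N d"
proof -
  have "mv4 (c1, n1) (u1, n1) (r1, n2) (c'1, n2) = (ind (c1, n1) - ind (u1, n1)) + (ind (r1, n2) - ind (c'1, n2))"
    by (simp add: fun_eq_iff mv4_def)
  then show ?thesis using W0_sub ind_dif_W0[OF assms(1,2)] ind_dif_W0[OF assms(3,4)]
    unfolding mv.subspace_def by simp
qed

lemma pt_slk: "l \<in> ineq_idx N d \<Longrightarrow> slk N d l (pt N d) = 1"
proof (cases l)
  case (I4 i n)
  assume "l \<in> ineq_idx N d"
  then have m: "1 \<le> i" "i \<le> d" "i \<le> n" "n + d + 1 < N + i" using I4 by (auto simp: I4_mem)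
  then have "free N d i n" "free N d i (n+1)" by (auto simp: free_def)
  then show ?thesis using I4 by (simp add: pt_def)
next
  case (I5 i n)
  assume "l \<in> ineq_idx N d"
  then have m: "1 < i" "i \<le> d" "i \<le> n" "n + d < N + i" using I5 by (auto simp: I5_mem)
  then have "free N d i n" "free N d (i-1) (n-1)" by (auto simp: free_def)
  then show ?thesis using I5 m by (simp add: pt_def of_nat_diff)
next
  case I6
  have "free N d d d" using dN d2 by (auto simp: free_def)
  then show ?thesis using I6 by (simp add: pt_def)
next
  case I7
  have "free N d 1 (N-d)" using dN d2 by (auto simp: free_def)
  then show ?thesis using I7 dN N5 by (simp add: pt_def of_nat_diff)
qed

definition Mc :: real where "Mc = real (min d (N - d)) - 1"

lemma Mc_ge: "1 \<le> Mc" using d2 dN by (simp add: Mc_def)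

lemma wm_dd: "wm N d d d = - Mc"
proof -
  have "free N d d d" using dN d2 by (auto simp: free_def)
  then show ?thesis using dN by (cases "d + d \<le> N") (auto simp: wm_def Mc_def min_def of_nat_diff)
qed

lemma wm_1: "wm N d 1 (N - d) = Mc"
proof -
  have "free N d 1 (N - d)" using dN d2 by (auto simp: free_def)
  then show ?thesis using dN by (simp add: wm_def Mc_def min_def)
qed

lemma wm_edges: "l \<in> ineq_idx N d \<Longrightarrow> l \<noteq> I6 \<Longrightarrow> l \<noteq> I7 \<Longrightarrow> 0 \<le> slin N d l (wm N d)"
proof (cases l)
  case (I4 i n)
  assume "l \<in> ineq_idx N d"
  then have m: "1 \<le> i" "i \<le> d" "i \<le> n" "n + d + 1 < N + i" using I4 by (auto simp: I4_mem)
  then have f: "free N d i n" "free N d i (n+1)" by (auto simp: free_def)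
  have a: "real (n + d - N) \<le> real (n + 1 + d - N)" by simp
  have b: "real (min n d) \<le> real (min (n+1) d)" by simp
  show ?thesis using I4 f a b by (simp add: wm_def)
next
  case (I5 i n)
  assume "l \<in> ineq_idx N d"
  then have m: "1 < i" "i \<le> d" "i \<le> n" "n + d < N + i" using I5 by (auto simp: I5_mem)
  then have f: "free N d i n" "free N d (i-1) (n-1)" by (auto simp: free_def)
  have a: "real (n + d - N) \<le> real (n - 1 + d - N) + 1" using m by linarith
  have b: "real (min n d) \<le> real (min (n - 1) d) + 1" using m by linarith
  show ?thesis using I5 f a b m by (simp add: wm_def of_nat_diff)
qed auto

lemma q_from_dir:
  assumes l: "l \<in> ineq_idx N d" and v: "v \<in> W0 N d" and vl: "slin N d l v = -2"
    and vo: "\<And>l'. l' \<in> ineq_idx N d \<Longrightarrow> l' \<noteq> l \<Longrightarrow> -1 \<le> slin N d l' v"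
  shows "\<exists>q\<in>Aset N d. slk N d l q = 0 \<and> (\<forall>l'\<in>ineq_idx N d. l' \<noteq> l \<longrightarrow> 1/2 \<le> slk N d l' q)"
proof (intro bexI conjI ballI impI)
  have sv: "sc (1/2) v \<in> W0 N d" using W0_sub v unfolding mv.subspace_def by blast
  show "pt N d + sc (1/2) v \<in> Aset N d" using A_add_W0[OF pt_A sv] .
  show "slk N d l (pt N d + sc (1/2) v) = 0" using pt_slk[OF l] vl by (simp add: slk_add slin_sc)
  fix l' assume l': "l' \<in> ineq_idx N d" "l' \<noteq> l"
  then show "1/2 \<le> slk N d l' (pt N d + sc (1/2) v)" using pt_slk[OF l'(1)] vo[OF l'] by (simp add: slk_add slin_sc)
qed

end


context setting begin

lemma dir_generic:
  assumes f: "free N d c1 n1" "free N d u1 n1" "free N d r1 n2" "free N d c'1 n2"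
    and dist: "(c1, n1) \<noteq> (r1, n2)" "(u1, n1) \<noteq> (c'1, n2)" "(c1, n1) \<noteq> (c'1, n2)" "(c1, n1) \<noteq> (u1, n1)"
              "(r1, n2) \<noteq> (c'1, n2)" "(r1, n2) \<noteq> (u1, n1)"
    and l: "l \<in> ineq_idx N d" and vl: "slin N d l (mv4 (c1, n1) (u1, n1) (r1, n2) (c'1, n2)) = -2"
    and no4: "\<And>i' n'. I4 i' n' \<in> ineq_idx N d \<Longrightarrow> I4 i' n' \<noteq> l \<Longrightarrow>
       \<not> ((i', n') \<in> {(c1, n1), (r1, n2)} \<and> (i', n'+1) \<in> {(c'1, n2), (u1, n1)})"
    and no5: "\<And>i' n'. I5 i' n' \<in> ineq_idx N d \<Longrightarrow> I5 i' n' \<noteq> l \<Longrightarrow>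
       \<not> ((i', n') \<in> {(c1, n1), (r1, n2)} \<and> (i'-1, n'-1) \<in> {(c'1, n2), (u1, n1)})"
  shows "\<exists>q\<in>Aset N d. slk N d l q = 0 \<and> (\<forall>l'\<in>ineq_idx N d. l' \<noteq> l \<longrightarrow> 1/2 \<le> slk N d l' q)"
proof (rule q_from_dir[OF l mv4_W0[OF f] vl])
  fix l' assume l': "l' \<in> ineq_idx N d" "l' \<noteq> l"
  let ?v = "mv4 (c1, n1) (u1, n1) (r1, n2) (c'1, n2)"
  show "-1 \<le> slin N d l' ?v"
  proof (cases l')
    case (I4 i' n') then show ?thesis using mv4_edge[OF dist, of i' n' i' "n'+1"] no4[of i' n'] l' by auto
  next
    case (I5 i' n') then show ?thesis using mv4_edge[OF dist, of i' n' "i'-1" "n'-1"] no5[of i' n'] l' by auto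
  next
    case I6 then show ?thesis using mv4_val(1)[OF dist, of d d] by simp
  next
    case I7 then show ?thesis using mv4_val(2)[OF dist, of 1 "N-d"] by simp
  qed
qed

lemma q_I4:
  assumes l: "I4 i n \<in> ineq_idx N d"
  shows "\<exists>q\<in>Aset N d. slk N d (I4 i n) q = 0 \<and> (\<forall>l'\<in>ineq_idx N d. l' \<noteq> I4 i n \<longrightarrow> 1/2 \<le> slk N d l' q)"
proof -
  have m: "1 \<le> i" "i \<le> d" "i \<le> n" "n + d + 1 < N + i" "(i, n) \<noteq> (1, 1)" "(i, n) \<noteq> (d, N - 2)"
    using l by (auto simp: I4_mem)
  define ui where "ui = (if i = 1 then 2 else i - 1)"
  define ri where "ri = (if i = d then d - 1 else i + 1)"
  have f: "free N d i n" "free N d ui n" "free N d ri (n+1)" "free N d i (n+1)"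
    using m d2 dN by (auto simp: free_def ui_def ri_def)
  have dist: "(i, n) \<noteq> (ri, n+1)" "(ui, n) \<noteq> (i, n+1)" "(i, n) \<noteq> (i, n+1)" "(i, n) \<noteq> (ui, n)"
              "(ri, n+1) \<noteq> (i, n+1)" "(ri, n+1) \<noteq> (ui, n)"
    using m d2 by (auto simp: ui_def ri_def)
  have key: "ri - 1 \<noteq> ui" using m d2 by (auto simp: ri_def ui_def)
  show ?thesis
  proof (rule dir_generic[OF f dist l])
    show "slin N d (I4 i n) (mv4 (i, n) (ui, n) (ri, n + 1) (i, n + 1)) = -2"
      using mv4_val(5,6)[OF dist] by simp
    show "\<not> ((i', n') \<in> {(i, n), (ri, n+1)} \<and> (i', n'+1) \<in> {(i, n+1), (ui, n)})"
      if "I4 i' n' \<in> ineq_idx N d" "I4 i' n' \<noteq> I4 i n" for i' n'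
      using that by auto
    show "\<not> ((i', n') \<in> {(i, n), (ri, n+1)} \<and> (i'-1, n'-1) \<in> {(i, n+1), (ui, n)})"
      if "I5 i' n' \<in> ineq_idx N d" "I5 i' n' \<noteq> I4 i n" for i' n'
      using that m key by auto
  qed
qed

lemma q_I5:
  assumes l: "I5 i n \<in> ineq_idx N d"
  shows "\<exists>q\<in>Aset N d. slk N d (I5 i n) q = 0 \<and> (\<forall>l'\<in>ineq_idx N d. l' \<noteq> I5 i n \<longrightarrow> 1/2 \<le> slk N d l' q)"
proof -
  have m: "1 < i" "i \<le> d" "i \<le> n" "n + d < N + i" "(i, n) \<noteq> (2, 2)" "(i, n) \<noteq> (d, N - 1)"
    using l by (auto simp: I5_mem)
  define ui where "ui = (if n + d + 1 = N + i then i + 1 else i - 1)"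
  define ri where "ri = (if n = i then i - 2 else i)"
  have f: "free N d i n" "free N d ui n" "free N d ri (n-1)" "free N d (i-1) (n-1)"
    using m d2 dN by (auto simp: free_def ui_def ri_def)
  have dist: "(i, n) \<noteq> (ri, n-1)" "(ui, n) \<noteq> (i-1, n-1)" "(i, n) \<noteq> (i-1, n-1)" "(i, n) \<noteq> (ui, n)"
              "(ri, n-1) \<noteq> (i-1, n-1)" "(ri, n-1) \<noteq> (ui, n)"
    using m d2 by (auto simp: ui_def ri_def)
  have key: "ri \<noteq> ui" using m d2 by (auto simp: ri_def ui_def)
  have n2: "2 \<le> n" using m by simp
  show ?thesis
  proof (rule dir_generic[OF f dist l])
    show "slin N d (I5 i n) (mv4 (i, n) (ui, n) (ri, n - 1) (i - 1, n - 1)) = -2"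
      using mv4_val(5,6)[OF dist] by simp
    show "\<not> ((i', n') \<in> {(i, n), (ri, n-1)} \<and> (i', n'+1) \<in> {(i-1, n-1), (ui, n)})"
      if "I4 i' n' \<in> ineq_idx N d" "I4 i' n' \<noteq> I5 i n" for i' n'
      using that n2 key by auto
    show "\<not> ((i', n') \<in> {(i, n), (ri, n-1)} \<and> (i'-1, n'-1) \<in> {(i-1, n-1), (ui, n)})"
      if "I5 i' n' \<in> ineq_idx N d" "I5 i' n' \<noteq> I5 i n" for i' n'
      using that n2 key by auto
  qed
qed

end


lemma dif_edge: "a \<noteq> b \<Longrightarrow> \<not> ((i, n) = a \<and> (j, m) = b) \<Longrightarrow> -1 \<le> (ind a - ind b) j m - (ind a - ind b) i n"
  by (auto simp: ind_def)

context setting begin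

lemma q_wm:
  assumes l: "l = I6 \<or> l = I7" and a: "free N d a1 b" and b: "free N d a2 b" and ab: "a1 \<noteq> a2"
    and vl: "slin N d l (ind (a1, b) - ind (a2, b)) = 0"
    and vo: "\<And>l'. (l' = I6 \<or> l' = I7) \<Longrightarrow> l' \<noteq> l \<Longrightarrow> slin N d l' (ind (a1, b) - ind (a2, b)) = 1"
    and no4: "\<And>i' n'. \<not> ((i', n') = (a1, b) \<and> (i', n'+1) = (a2, b))"
    and no5: "\<And>i' n'. \<not> ((i', n') = (a1, b) \<and> (i'-1, n'-1) = (a2, b))"
  shows "\<exists>q\<in>Aset N d. slk N d l q = 0 \<and> (\<forall>l'\<in>ineq_idx N d. l' \<noteq> l \<longrightarrow> 1/2 \<le> slk N d l' q)"
proof -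
  let ?z = "ind (a1, b) - ind (a2, b)"
  let ?v = "sc (2 / Mc) (wm N d) + ?z"
  have Mc: "1 \<le> Mc" by (rule Mc_ge)
  have v: "?v \<in> W0 N d" using W0_sub wm_W0 ind_dif_W0[OF a b] unfolding mv.subspace_def by blast
  have lI: "l \<in> ineq_idx N d" using l by (auto simp: ineq_idx_def)
  have wI6: "slin N d I6 (wm N d) = - Mc" by (simp add: wm_dd)
  have wI7: "slin N d I7 (wm N d) = - Mc" using wm_1 by simp
  have wl: "slin N d l (wm N d) = - Mc" using l wI6 wI7 by auto
  show ?thesis
  proof (rule q_from_dir[OF lI v])
    show "slin N d l ?v = -2" using wl vl Mc by (simp add: slin_add slin_sc)
    fix l' assume l': "l' \<in> ineq_idx N d" "l' \<noteq> l"
    show "-1 \<le> slin N d l' ?v"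
    proof (cases "l' = I6 \<or> l' = I7")
      case True
      then have "slin N d l' (wm N d) = - Mc" using wI6 wI7 by auto
      then show ?thesis using vo[OF True l'(2)] Mc by (simp add: slin_add slin_sc)
    next
      case False
      have w0: "0 \<le> slin N d l' (wm N d)" using wm_edges l' False by auto
      have z: "-1 \<le> slin N d l' ?z"
      proof (cases l')
        case (I4 i' n') then show ?thesis using dif_edge[of "(a1,b)" "(a2,b)" i' n' i' "n'+1"] ab no4[of i' n'] by simp
      next
        case (I5 i' n') then show ?thesis using dif_edge[of "(a1,b)" "(a2,b)" i' n' "i'-1" "n'-1"] ab no5[of i' n'] by simp
      qed (use False in auto)
      have "0 \<le> (2 / Mc) * slin N d l' (wm N d)" using w0 Mc by simp
      then show ?thesis using z by (simp add: slin_add slin_sc)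
    qed
  qed
qed

lemma q_I6: "\<exists>q\<in>Aset N d. slk N d I6 q = 0 \<and> (\<forall>l'\<in>ineq_idx N d. l' \<noteq> I6 \<longrightarrow> 1/2 \<le> slk N d l' q)"
proof (rule q_wm)
  show "free N d 2 (N - d)" "free N d 1 (N - d)" using d2 dN by (auto simp: free_def)
  show "slin N d I6 (ind (2, N - d) - ind (1, N - d)) = 0" using d2 dN N5 by (auto simp: ind_def)
  show "slin N d l' (ind (2, N - d) - ind (1, N - d)) = 1" if "l' = I6 \<or> l' = I7" "l' \<noteq> I6" for l'
    using that d2 dN by (auto simp: ind_def)
qed (use d2 dN in auto)

lemma q_I7: "\<exists>q\<in>Aset N d. slk N d I7 q = 0 \<and> (\<forall>l'\<in>ineq_idx N d. l' \<noteq> I7 \<longrightarrow> 1/2 \<le> slk N d l' q)"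
proof (rule q_wm)
  show "free N d d d" "free N d (d-1) d" using d2 dN by (auto simp: free_def)
  show "slin N d I7 (ind (d, d) - ind (d - 1, d)) = 0" using d2 dN N5 by (auto simp: ind_def)
  show "slin N d l' (ind (d, d) - ind (d - 1, d)) = 1" if "l' = I6 \<or> l' = I7" "l' \<noteq> I7" for l'
    using that d2 by (auto simp: ind_def)
  show "d \<noteq> d - 1" using d2 by simp
qed (use d2 in auto)

lemma q_exists:
  assumes l: "l \<in> ineq_idx N d"
  shows "\<exists>q\<in>Aset N d. slk N d l q = 0 \<and> (\<forall>l'\<in>ineq_idx N d. l' \<noteq> l \<longrightarrow> 1/2 \<le> slk N d l' q)"
  using l q_I4 q_I5 q_I6 q_I7 by (cases l) auto

end


context setting begin

lemma eq_idx_finite: "finite (eq_idx N d)"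
proof -
  have "eq_idx N d \<subseteq> (\<lambda>(i,n). E1 i n) ` ({0..d} \<times> {0..N}) \<union> (\<lambda>(i,n). E2 i n) ` ({0..d} \<times> {0..N})
      \<union> E3 ` {0..N}"
    by (auto simp: eq_idx_def)
  then show ?thesis by (rule finite_subset) auto
qed

lemma coeff_split: "eq_coeff N d e i n = (if e = E1 i n then 1 else 0) + (if e = E2 i n then 1 else 0)
    + (if 1 \<le> i \<and> i \<le> d then (if e = E3 n then 1 else 0) else 0)"
  by (cases e) auto

lemma coeff_sum:
  "(\<Sum>e\<in>eq_idx N d. c e * eq_coeff N d e i n) =
     (if E1 i n \<in> eq_idx N d then c (E1 i n) else 0) + (if E2 i n \<in> eq_idx N d then c (E2 i n) else 0)
     + (if 1 \<le> i \<and> i \<le> d then (if E3 n \<in> eq_idx N d then c (E3 n) else 0) else 0)"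
proof -
  have "(\<Sum>e\<in>eq_idx N d. c e * eq_coeff N d e i n) =
      (\<Sum>e\<in>eq_idx N d. (if e = E1 i n then c e else 0) + (if e = E2 i n then c e else 0)
         + (if 1 \<le> i \<and> i \<le> d then (if e = E3 n then c e else 0) else 0))"
    by (rule sum.cong) (auto simp: coeff_split)
  also have "\<dots> = (\<Sum>e\<in>eq_idx N d. if e = E1 i n then c e else 0) + (\<Sum>e\<in>eq_idx N d. if e = E2 i n then c e else 0)
         + (if 1 \<le> i \<and> i \<le> d then (\<Sum>e\<in>eq_idx N d. if e = E3 n then c e else 0) else 0)"
  proof (cases "1 \<le> i \<and> i \<le> d")
    case True then show ?thesis by (simp add: sum.distrib)
  next
    case False then have P: "(1 \<le> i \<and> i \<le> d) = False" by simp
    show ?thesis unfolding P by (simp add: sum.distrib)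
  qed
  finally show ?thesis by (simp add: sum.delta eq_idx_finite)
qed

lemma lin_indep: "eqs_lin_indep N d"
  unfolding eqs_lin_indep_def
proof (intro allI impI ballI)
  fix c :: "eq_label \<Rightarrow> real" and e
  assume H: "\<forall>i n. (\<Sum>e\<in>eq_idx N d. c e * eq_coeff N d e i n) = 0" and e: "e \<in> eq_idx N d"
  have S: "(if E1 i n \<in> eq_idx N d then c (E1 i n) else 0) + (if E2 i n \<in> eq_idx N d then c (E2 i n) else 0)
     + (if E3 n \<in> eq_idx N d then c (E3 n) else 0) = 0" if "1 \<le> i" "i \<le> d" for i n
    using H[rule_format, of i n] that by (simp add: coeff_sum)
  have c3: "c (E3 n) = 0" if "E3 n \<in> eq_idx N d" for n
  proof -
    have n: "0 < n" "n < N" using that E3_mem by auto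
    define i0 where "i0 = (if N < n + d + 1 then n + d + 1 - N else 1)"
    have i0: "1 \<le> i0" "i0 \<le> d" "E1 i0 n \<notin> eq_idx N d" "E2 i0 n \<notin> eq_idx N d"
      using n dN d2 by (auto simp: i0_def E1_mem E2_mem)
    show ?thesis using S[OF i0(1,2), of n] i0(3,4) that by simp
  qed
  show "c e = 0"
  proof (cases e)
    case (E1 i n)
    then have m: "1 \<le> i" "i \<le> d" "n \<le> N" "n < i" using e by (auto simp: E1_mem)
    have "E2 i n \<notin> eq_idx N d" using m dN by (auto simp: E2_mem)
    then show ?thesis using S[OF m(1,2), of n] e E1 c3[of n] by (auto split: if_splits)
  next
    case (E2 i n)
    then have m: "1 \<le> i" "i \<le> d" "n \<le> N" "i + N < n + d + 1" using e by (auto simp: E2_mem)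
    have "E1 i n \<notin> eq_idx N d" using m dN by (auto simp: E1_mem)
    then show ?thesis using S[OF m(1,2), of n] e E2 c3[of n] by (auto split: if_splits)
  next
    case (E3 n) then show ?thesis using c3 e by simp
  qed
qed

section \<open>Affine hull\<close>

lemma ball_slk:
  assumes y: "y \<in> Aset N d" and z: "z \<in> Aset N d" and r: "\<And>i n. \<bar>z i n - y i n\<bar> \<le> r"
    and s: "2 * r \<le> slk N d l y"
  shows "0 \<le> slk N d l z"
proof -
  have "slk N d l z - slk N d l y = slin N d l (z - y)" by (rule slk_diff)
  moreover have "\<bar>slin N d l (z - y)\<bar> \<le> 2 * r" by (rule slin_bound) (use r in simp)
  ultimately show ?thesis using s by linarith
qed

lemma pt_Lam: "pt N d \<in> Lambda N d"
  using pt_A pt_slk by (simp add: Lam_eq reduced_iff)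

lemma aff_hull: "mat_affine_hull (Lambda N d) = {x \<in> mat_space N d. \<forall>e\<in>eq_idx N d. eq_holds N d e x}"
proof
  show "mat_affine_hull (Lambda N d) \<subseteq> {x \<in> mat_space N d. \<forall>e\<in>eq_idx N d. eq_holds N d e x}"
  proof
    fix x assume "x \<in> mat_affine_hull (Lambda N d)"
    then obtain T u where T: "finite T" "T \<subseteq> Lambda N d" "sum u T = 1"
      and x: "\<And>i n. x i n = (\<Sum>y\<in>T. u y * y i n)"
      unfolding mat_affine_hull_def by blast
    have TA: "y \<in> Aset N d" if "y \<in> T" for y using T(2) that Lam_eq red_A by auto
    have "x \<in> Aset N d"
    proof (rule A_I)
      show "x \<in> mat_space N d" unfolding mat_space_def
      proof (intro CollectI allI impI)
        fix i n assume "(i, n) \<notin> idx N d"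
        then have z: "\<forall>y\<in>T. y i n = 0" using TA A_ms by (auto simp: mat_space_def)
        show "x i n = 0" unfolding x using z by (auto intro!: sum.neutral)
      qed
      show "x i n = 0" if "1 \<le> i" "i \<le> d" "n \<le> N" "n < i" for i n
        unfolding x using A_E1[OF TA that] by (auto intro!: sum.neutral)
      show "x i n = real N" if "1 \<le> i" "i \<le> d" "n \<le> N" "i + N < n + d + 1" for i n
      proof -
        have "(\<Sum>y\<in>T. u y * y i n) = (\<Sum>y\<in>T. u y * real N)"
          by (rule sum.cong) (use A_E2[OF TA that] in auto)
        then show ?thesis using T(3) by (simp add: x sum_distrib_right[symmetric])
      qed
      show "(\<Sum>i=1..d. x i n) = real d * real n" if "0 < n" "n < N" for n
      proof -
        have "(\<Sum>i=1..d. x i n) = (\<Sum>y\<in>T. u y * (\<Sum>i=1..d. y i n))"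
          by (simp add: x sum_distrib_left sum.swap[of _ T])
        also have "\<dots> = (\<Sum>y\<in>T. u y * (real d * real n))" using A_E3[OF TA that] by simp
        also have "\<dots> = real d * real n" using T(3) by (simp add: sum_distrib_right[symmetric])
        finally show ?thesis .
      qed
    qed
    then show "x \<in> {x \<in> mat_space N d. \<forall>e\<in>eq_idx N d. eq_holds N d e x}" by (simp add: Aset_def)
  qed
next
  show "{x \<in> mat_space N d. \<forall>e\<in>eq_idx N d. eq_holds N d e x} \<subseteq> mat_affine_hull (Lambda N d)"
  proof
    fix x assume "x \<in> {x \<in> mat_space N d. \<forall>e\<in>eq_idx N d. eq_holds N d e x}"
    then have x: "x \<in> Aset N d" by (simp add: Aset_def)
    show "x \<in> mat_affine_hull (Lambda N d)"
    proof (cases "x = pt N d")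
      case True
      show ?thesis unfolding mat_affine_hull_def
        by (rule CollectI, rule exI[of _ "{pt N d}"], rule exI[of _ "\<lambda>_. 1"]) (use True pt_Lam in auto)
    next
      case False
      define C where "C = 1 + (\<Sum>(i,n)\<in>idx N d. \<bar>x i n - pt N d i n\<bar>)"
      have finI: "finite (idx N d)" by (simp add: idx_def)
      have C1: "1 \<le> C" unfolding C_def by (simp add: sum_nonneg split_def)
      have bnd: "\<bar>x i n - pt N d i n\<bar> \<le> C" for i n
      proof (cases "(i, n) \<in> idx N d")
        case True
        have "\<bar>x i n - pt N d i n\<bar> \<le> (\<Sum>(i,n)\<in>idx N d. \<bar>x i n - pt N d i n\<bar>)"
          using member_le_sum[OF True, of "\<lambda>(i,n). \<bar>x i n - pt N d i n\<bar>"] finI by (simp add: split_def)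
        then show ?thesis unfolding C_def by simp
      next
        case False
        then show ?thesis using A_ms[OF x] A_ms[OF pt_A] C1 by (simp add: mat_space_def)
      qed
      define e where "e = 1 / (2 * C)"
      have e0: "0 < e" using C1 by (simp add: e_def)
      define y where "y = pt N d + sc e (x - pt N d)"
      have yW: "sc e (x - pt N d) \<in> W0 N d" using W0_sub A_W0[OF x pt_A] unfolding mv.subspace_def by blast
      have yA: "y \<in> Aset N d" unfolding y_def by (rule A_add_W0[OF pt_A yW])
      have yb: "\<bar>y i n - pt N d i n\<bar> \<le> 1/2" for i n
      proof -
        have "\<bar>y i n - pt N d i n\<bar> = e * \<bar>x i n - pt N d i n\<bar>" using e0 by (simp add: y_def abs_mult)
        also have "\<dots> \<le> e * C" using bnd[of i n] e0 by (intro mult_left_mono) auto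
        also have "\<dots> = 1/2" using C1 by (simp add: e_def)
        finally show ?thesis .
      qed
      have yL: "y \<in> Lambda N d"
        unfolding Lam_eq reduced_iff
        using yA ball_slk[OF pt_A yA yb] pt_slk by simp
      have ypt: "y \<noteq> pt N d"
      proof
        assume "y = pt N d"
        then have "\<forall>i n. e * (x i n - pt N d i n) = 0" by (simp add: y_def fun_eq_iff)
        then have "x = pt N d" using e0 by (simp add: fun_eq_iff)
        then show False using False by simp
      qed
      show ?thesis unfolding mat_affine_hull_def
      proof (rule CollectI, rule exI[of _ "{y, pt N d}"], rule exI[of _ "\<lambda>z. if z = y then 1/e else 1 - 1/e"],
          intro conjI allI)
        show "finite {y, pt N d}" by simp
        show "{y, pt N d} \<noteq> {}" by simp
        show "{y, pt N d} \<subseteq> Lambda N d" using yL pt_Lam by simp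
        show "(\<Sum>z\<in>{y, pt N d}. if z = y then 1/e else 1 - 1/e) = 1" using ypt by simp
        fix i n
        show "x i n = (\<Sum>z\<in>{y, pt N d}. (if z = y then 1/e else 1 - 1/e) * z i n)"
          using ypt e0 by (simp add: y_def field_simps)
      qed
    qed
  qed
qed

section \<open>Irredundancy\<close>

lemma irred:
  assumes l: "l \<in> ineq_idx N d"
  shows "\<exists>x\<in>mat_space N d. (\<forall>e\<in>eq_idx N d. eq_holds N d e x)
         \<and> (\<forall>l'\<in>ineq_idx N d - {l}. ineq_holds N d l' x) \<and> \<not> ineq_holds N d l x"
proof -
  obtain q where q: "q \<in> Aset N d" "slk N d l q = 0" "\<forall>l'\<in>ineq_idx N d. l' \<noteq> l \<longrightarrow> 1/2 \<le> slk N d l' q"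
    using q_exists[OF l] by blast
  define z where "z = (\<lambda>i n. (1 + 1) * q i n - 1 * pt N d i n)"
  have zA: "z \<in> Aset N d" unfolding z_def by (rule A_comb[OF q(1) pt_A])
  have sz: "slk N d l' z = 2 * slk N d l' q - slk N d l' (pt N d)" for l'
    unfolding z_def slk_comb by simp
  show ?thesis
  proof (intro bexI conjI ballI)
    show "z \<in> mat_space N d" using A_ms[OF zA] .
    show "eq_holds N d e z" if "e \<in> eq_idx N d" for e using zA that by (simp add: Aset_def)
    show "ineq_holds N d l' z" if lt: "l' \<in> ineq_idx N d - {l}" for l'
    proof -
      have "1/2 \<le> slk N d l' q" using q(3) lt by auto
      then show ?thesis using sz[of l'] pt_slk[of l'] lt by (simp add: holds_slk)
    qed
    show "\<not> ineq_holds N d l z" using q(2) sz[of l] pt_slk[OF l] by (simp add: holds_slk)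
  qed
qed

end


section \<open>Facets\<close>

definition phi :: "nat \<Rightarrow> nat \<Rightarrow> mat \<Rightarrow> mat \<Rightarrow> real" where
  "phi N d a x = (\<Sum>(i,n)\<in>idx N d. a i n * x i n)"

lemma phi_add: "phi N d a (x + y) = phi N d a x + phi N d a y"
  by (simp add: phi_def split_def distrib_left sum.distrib)
lemma phi_sc: "phi N d a (sc c x) = c * phi N d a x"
  by (simp add: phi_def split_def sum_distrib_left algebra_simps)
lemma phi_diff: "phi N d a (x - y) = phi N d a x - phi N d a y"
  by (simp add: phi_def split_def right_diff_distrib sum_subtractf)
lemma phi_comb: "phi N d a (\<lambda>i n. (1 + t) * x i n - t * y i n) = (1 + t) * phi N d a x - t * phi N d a y"
  by (simp add: phi_def split_def right_diff_distrib sum_subtractf sum_distrib_left algebra_simps)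

lemma eps_mono:
  assumes s: "0 < (s::real)" and t: "0 < t" "t \<le> t'" and h: "0 \<le> (1 + t') * s - t' * r"
  shows "0 \<le> (1 + t) * s - t * r"
proof (cases "0 \<le> s - r")
  case True
  have "0 \<le> t * (s - r)" using True t by simp
  then show ?thesis using s by (simp add: algebra_simps)
next
  case False
  have "t' * (s - r) \<le> t * (s - r)" using False t by (intro mult_right_mono_neg) auto
  then show ?thesis using h by (simp add: algebra_simps)
qed

lemma eps_pos:
  fixes s r :: "'a \<Rightarrow> real"
  assumes "finite I" "\<forall>j\<in>I. 0 < s j"
  shows "\<exists>t>0. \<forall>j\<in>I. 0 \<le> (1 + t) * s j - t * r j"
  using assms
proof (induction rule: finite_induct)
  case empty
  have "(0::real) < 1" by simp
  then show ?case by blast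
next
  case (insert j I)
  obtain t0 where t0: "0 < t0" "\<forall>k\<in>I. 0 \<le> (1 + t0) * s k - t0 * r k" using insert by auto
  have sj: "0 < s j" using insert by simp
  define tj where "tj = s j / (1 + \<bar>r j\<bar>)"
  have tj0: "0 < tj" using sj by (simp add: tj_def)
  have hj: "0 \<le> (1 + tj) * s j - tj * r j"
  proof -
    have "tj * \<bar>r j\<bar> \<le> s j"
    proof -
      have "tj * \<bar>r j\<bar> = s j * (\<bar>r j\<bar> / (1 + \<bar>r j\<bar>))" by (simp add: tj_def)
      also have "\<dots> \<le> s j * 1" using sj by (intro mult_left_mono) auto
      finally show ?thesis by simp
    qed
    moreover have "tj * r j \<le> tj * \<bar>r j\<bar>" using tj0 by (intro mult_left_mono) auto
    moreover have "0 \<le> tj * s j" using tj0 sj by simp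
    ultimately show ?thesis by (simp add: algebra_simps)
  qed
  define t where "t = min t0 tj"
  have t: "0 < t" using t0 tj0 by (simp add: t_def)
  show ?case
  proof (intro exI[of _ t] conjI ballI)
    show "0 < t" by (rule t)
    fix k assume k: "k \<in> insert j I"
    show "0 \<le> (1 + t) * s k - t * r k"
    proof (cases "k = j")
      case True then show ?thesis using eps_mono[OF sj t _ hj] by (simp add: t_def)
    next
      case False
      then have kI: "k \<in> I" using k by simp
      have "0 < s k" using insert kI by simp
      then show ?thesis using eps_mono[OF _ t _ t0(2)[rule_format, OF kI]] by (simp add: t_def)
    qed
  qed
qed

context setting begin

definition basis0 :: "mat set \<Rightarrow> bool" where
  "basis0 B \<longleftrightarrow> B \<subseteq> W0 N d \<and> mv.independent B \<and> W0 N d \<subseteq> mv.span B \<and> finite B"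

lemma W0_zero: "v \<in> W0 N d \<Longrightarrow> (i, n) \<notin> idx N d \<Longrightarrow> v i n = 0"
proof -
  assume v: "v \<in> W0 N d" and i: "(i, n) \<notin> idx N d"
  have "\<not> free N d i n" using free_idx[of N d i n] i by blast
  then show ?thesis using v by (simp add: W0_def)
qed

lemma W0_span_ind: "W0 N d \<subseteq> mv.span (ind ` idx N d)"
proof
  fix v assume v: "v \<in> W0 N d"
  have finI: "finite (idx N d)" by (simp add: idx_def)
  have "(\<Sum>c\<in>idx N d. sc (v (fst c) (snd c)) (ind c)) = v"
  proof (rule ext, rule ext)
    fix i n
    have "(\<Sum>c\<in>idx N d. sc (v (fst c) (snd c)) (ind c)) i n = (\<Sum>c\<in>idx N d. if c = (i, n) then v i n else 0)"
      unfolding sum_apply2 by (rule sum.cong) (auto simp: ind_def)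
    also have "\<dots> = v i n" using finI W0_zero[OF v] by (simp add: sum.delta')
    finally show "(\<Sum>c\<in>idx N d. sc (v (fst c) (snd c)) (ind c)) i n = v i n" .
  qed
  moreover have "(\<Sum>c\<in>idx N d. sc (v (fst c) (snd c)) (ind c)) \<in> mv.span (ind ` idx N d)"
    by (intro mv.span_sum mv.span_scale mv.span_base) auto
  ultimately show "v \<in> mv.span (ind ` idx N d)" by simp
qed

lemma basis_exists: "\<exists>B. basis0 B"
proof -
  obtain B where B: "B \<subseteq> W0 N d" "mv.independent B" "W0 N d \<subseteq> mv.span B"
    using mv.maximal_independent_subset[of "W0 N d"] by blast
  have "finite (ind ` idx N d)" by (simp add: idx_def)
  then have "finite B" using mv.independent_span_bound[OF _ B(2)] B(1) W0_span_ind by blast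
  then show ?thesis using B by (auto simp: basis0_def)
qed

lemma bound_W0:
  assumes "finite B" "B \<subseteq> W0 N d"
  shows "\<exists>C>0. \<forall>b\<in>B. \<forall>i n. \<bar>b i n\<bar> \<le> C"
proof -
  have finI: "finite (idx N d)" by (simp add: idx_def)
  define C where "C = 1 + (\<Sum>b\<in>B. \<Sum>(i,n)\<in>idx N d. \<bar>b i n\<bar>)"
  have C: "0 < C" unfolding C_def by (simp add: sum_nonneg split_def add_pos_nonneg)
  have "\<bar>b i n\<bar> \<le> C" if b: "b \<in> B" for b i n
  proof (cases "(i, n) \<in> idx N d")
    case True
    have "\<bar>b i n\<bar> \<le> (\<Sum>(i,n)\<in>idx N d. \<bar>b i n\<bar>)"
      using member_le_sum[OF True, of "\<lambda>(i,n). \<bar>b i n\<bar>"] finI by (simp add: split_def)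
    also have "\<dots> \<le> (\<Sum>b\<in>B. \<Sum>(i,n)\<in>idx N d. \<bar>b i n\<bar>)"
      using member_le_sum[OF b, of "\<lambda>b. \<Sum>(i,n)\<in>idx N d. \<bar>b i n\<bar>"] assms(1)
      by (simp add: sum_nonneg split_def)
    finally show ?thesis unfolding C_def by simp
  next
    case False
    then show ?thesis using W0_zero[OF subsetD[OF assms(2) b] False] C by simp
  qed
  then show ?thesis using C by blast
qed

lemma dimL: assumes "basis0 B" shows "mat_aff_dim (Lambda N d) = int (card B)"
proof -
  have B: "B \<subseteq> W0 N d" "mv.independent B" "W0 N d \<subseteq> mv.span B" "finite B" using assms by (auto simp: basis0_def)
  obtain C where C: "0 < C" "\<forall>b\<in>B. \<forall>i n. \<bar>b i n\<bar> \<le> C" using bound_W0[OF B(4,1)] by blast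
  define e where "e = 1 / (2 * C)"
  have e: "0 < e" using C by (simp add: e_def)
  show ?thesis
  proof (rule aff_dim_eq[OF B(4) B(2) _ pt_Lam])
    show "\<forall>y\<in>Lambda N d. y - pt N d \<in> mv.span B"
      using A_W0 pt_A B(3) Lam_eq red_A by blast
    show "e \<noteq> 0" using e by simp
    show "\<forall>b\<in>B. pt N d + sc e b \<in> Lambda N d"
    proof
      fix b assume b: "b \<in> B"
      have sb: "sc e b \<in> W0 N d" using W0_sub b B(1) unfolding mv.subspace_def by blast
      have zA: "pt N d + sc e b \<in> Aset N d" using A_add_W0[OF pt_A sb] .
      have zb: "\<bar>(pt N d + sc e b) i n - pt N d i n\<bar> \<le> 1/2" for i n
      proof -
        have "\<bar>(pt N d + sc e b) i n - pt N d i n\<bar> = e * \<bar>b i n\<bar>" using e by (simp add: abs_mult)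
        also have "\<dots> \<le> e * C" using C b e by (intro mult_left_mono) auto
        also have "\<dots> = 1/2" using C by (simp add: e_def)
        finally show ?thesis .
      qed
      have "0 \<le> slk N d l (pt N d + sc e b)" if "l \<in> ineq_idx N d" for l
        by (rule ball_slk[OF pt_A zA zb]) (use pt_slk[OF that] in simp)
      then show "pt N d + sc e b \<in> Lambda N d"
        unfolding Lam_eq reduced_iff using zA by blast
    qed
  qed
qed

end


definition Fl :: "nat \<Rightarrow> nat \<Rightarrow> ineq_label \<Rightarrow> mat set" where
  "Fl N d l = {x \<in> Lambda N d. ineq_tight N d l x}"

lemma phi_ind: "phi N d (ind c) x = (if c \<in> idx N d then x (fst c) (snd c) else 0)"
proof -
  have fin: "finite (idx N d)" by (simp add: idx_def)
  have "phi N d (ind c) x = (\<Sum>p\<in>idx N d. if p = c then x (fst c) (snd c) else 0)"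
    unfolding phi_def by (rule sum.cong) (auto simp: ind_def)
  then show ?thesis using fin by (simp add: sum.delta')
qed

lemma phi_adiff: "phi N d (a - b) x = phi N d a x - phi N d b x"
  by (simp add: phi_def split_def left_diff_distrib sum_subtractf)
lemma phi_aneg: "phi N d (- a) x = - phi N d a x"
  by (simp add: phi_def split_def sum_negf)

lemma slin_zero: "slin N d l 0 = 0" by (cases l) auto

context setting begin

lemma Ul_sub: "mv.subspace (W0 N d \<inter> {v. slin N d l v = 0})"
  using W0_sub unfolding mv.subspace_def by (auto simp: slin_zero slin_add slin_sc)

lemma q_Fl: "q \<in> Aset N d \<Longrightarrow> slk N d l q = 0 \<Longrightarrow> (\<forall>l'\<in>ineq_idx N d. l' \<noteq> l \<longrightarrow> 1/2 \<le> slk N d l' q)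
   \<Longrightarrow> q \<in> Fl N d l"
proof -
  assume q: "q \<in> Aset N d" "slk N d l q = 0" "\<forall>l'\<in>ineq_idx N d. l' \<noteq> l \<longrightarrow> 1/2 \<le> slk N d l' q"
  have "\<forall>l'\<in>ineq_idx N d. 0 \<le> slk N d l' q"
  proof
    fix l' assume "l' \<in> ineq_idx N d"
    then show "0 \<le> slk N d l' q" using q by (cases "l' = l") auto
  qed
  then show ?thesis using q by (simp add: Fl_def Lam_eq reduced_iff tight_slk)
qed

lemma Fl_prop: "x \<in> Fl N d l \<Longrightarrow> x \<in> Aset N d \<and> slk N d l x = 0 \<and> x \<in> Lambda N d"
  by (simp add: Fl_def Lam_eq reduced_iff tight_slk)

lemma Ul_exists:
  assumes B0: "basis0 B0" and q: "q \<in> Aset N d" "slk N d l q = 0" and l: "l \<in> ineq_idx N d"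
  shows "\<exists>Bl. Bl \<subseteq> W0 N d \<inter> {v. slin N d l v = 0} \<and> mv.independent Bl
    \<and> W0 N d \<inter> {v. slin N d l v = 0} \<subseteq> mv.span Bl \<and> finite Bl \<and> card Bl + 1 = card B0"
proof -
  have B: "B0 \<subseteq> W0 N d" "mv.independent B0" "W0 N d \<subseteq> mv.span B0" "finite B0"
    using B0 by (auto simp: basis0_def)
  have u0: "q - pt N d \<in> W0 N d" using A_W0[OF q(1) pt_A] .
  have "slin N d l (q - pt N d) = -1" using slk_diff[of N d l q "pt N d"] q(2) pt_slk[OF l] by simp
  then have nz: "slin N d l (q - pt N d) \<noteq> 0" by simp
  have la: "\<And>x y. slin N d l (x + y) = slin N d l x + slin N d l y" by (rule slin_add)
  have ls: "\<And>c x. slin N d l (sc c x) = c * slin N d l x" by (rule slin_sc)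
  obtain Bl where "Bl \<subseteq> W0 N d \<inter> {v. slin N d l v = 0}" "mv.independent Bl"
    "W0 N d \<inter> {v. slin N d l v = 0} \<subseteq> mv.span Bl" "finite Bl" "card Bl + 1 = card B0"
    using ker_basis[where phi="slin N d l" and uz="q - pt N d", OF W0_sub B la ls u0 nz] by blast
  then show ?thesis by blast
qed

lemma dimF:
  assumes B0: "basis0 B0" and l: "l \<in> ineq_idx N d"
  shows "mat_aff_dim (Fl N d l) = int (card B0) - 1"
proof -
  obtain q where q: "q \<in> Aset N d" "slk N d l q = 0" "\<forall>l'\<in>ineq_idx N d. l' \<noteq> l \<longrightarrow> 1/2 \<le> slk N d l' q"
    using q_exists[OF l] by blast
  obtain Bl where Bl: "Bl \<subseteq> W0 N d \<inter> {v. slin N d l v = 0}" "mv.independent Bl"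
    "W0 N d \<inter> {v. slin N d l v = 0} \<subseteq> mv.span Bl" "finite Bl" "card Bl + 1 = card B0"
    using Ul_exists[OF B0 q(1,2) l] by blast
  obtain C where C: "0 < C" "\<forall>b\<in>Bl. \<forall>i n. \<bar>b i n\<bar> \<le> C" using bound_W0[OF Bl(4)] Bl(1) by blast
  define e where "e = 1 / (4 * C)"
  have e: "0 < e" using C by (simp add: e_def)
  have "mat_aff_dim (Fl N d l) = int (card Bl)"
  proof (rule aff_dim_eq[OF Bl(4) Bl(2) _ q_Fl[OF q]])
    show "\<forall>y\<in>Fl N d l. y - q \<in> mv.span Bl"
    proof
      fix y assume y: "y \<in> Fl N d l"
      have "y - q \<in> W0 N d" using A_W0 Fl_prop[OF y] q(1) by blast
      moreover have "slin N d l (y - q) = 0" using slk_diff[of N d l y q] Fl_prop[OF y] q(2) by simp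
      ultimately show "y - q \<in> mv.span Bl" using Bl(3) by blast
    qed
    show "e \<noteq> 0" using e by simp
    show "\<forall>b\<in>Bl. q + sc e b \<in> Fl N d l"
    proof
      fix b assume b: "b \<in> Bl"
      have bW: "b \<in> W0 N d" "slin N d l b = 0" using b Bl(1) by auto
      have sb: "sc e b \<in> W0 N d" using W0_sub bW(1) unfolding mv.subspace_def by blast
      have zA: "q + sc e b \<in> Aset N d" using A_add_W0[OF q(1) sb] .
      have zb: "\<bar>(q + sc e b) i n - q i n\<bar> \<le> 1/4" for i n
      proof -
        have "\<bar>(q + sc e b) i n - q i n\<bar> = e * \<bar>b i n\<bar>" using e by (simp add: abs_mult)
        also have "\<dots> \<le> e * C" using C b e by (intro mult_left_mono) auto
        also have "\<dots> = 1/4" using C by (simp add: e_def)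
        finally show ?thesis .
      qed
      have zl: "slk N d l (q + sc e b) = 0" using q(2) bW(2) by (simp add: slk_add slin_sc)
      have "q + sc e b \<in> Aset N d" by (rule zA)
      moreover have "\<forall>l'\<in>ineq_idx N d. l' \<noteq> l \<longrightarrow> 1/2 \<le> slk N d l' (q + sc e b) + 1/2"
      proof (intro ballI impI)
        fix l' assume l': "l' \<in> ineq_idx N d" "l' \<noteq> l"
        have "0 \<le> slk N d l' (q + sc e b)"
          by (rule ball_slk[OF q(1) zA zb]) (use q(3) l' in simp)
        then show "1/2 \<le> slk N d l' (q + sc e b) + 1/2" by simp
      qed
      ultimately have "\<forall>l'\<in>ineq_idx N d. 0 \<le> slk N d l' (q + sc e b)"
      proof -
        assume h: "\<forall>l'\<in>ineq_idx N d. l' \<noteq> l \<longrightarrow> 1/2 \<le> slk N d l' (q + sc e b) + 1/2"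
        show ?thesis
        proof
          fix l' assume l': "l' \<in> ineq_idx N d"
          show "0 \<le> slk N d l' (q + sc e b)"
          proof (cases "l' = l")
            case True then show ?thesis using zl by simp
          next
            case False then show ?thesis using h l' by auto
          qed
        qed
      qed
      then show "q + sc e b \<in> Fl N d l" using zA zl by (simp add: Fl_def Lam_eq reduced_iff tight_slk)
    qed
  qed
  then show ?thesis using Bl(5) by simp
qed

lemma face_fun: "l \<in> ineq_idx N d \<Longrightarrow> \<exists>a \<beta>. \<forall>x. phi N d a x = \<beta> - slk N d l x"
proof (cases l)
  case (I4 i n)
  assume "l \<in> ineq_idx N d"
  then have "free N d i n" "free N d i (n+1)" using I4 by (auto simp: I4_mem free_def)
  then have "(i, n) \<in> idx N d" "(i, n+1) \<in> idx N d" using free_idx by auto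
  then show ?thesis using I4 by (intro exI[of _ "ind (i, n) - ind (i, n+1)"] exI[of _ 0]) (simp add: phi_adiff phi_ind)
next
  case (I5 i n)
  assume "l \<in> ineq_idx N d"
  then have "free N d i n" "free N d (i-1) (n-1)" using I5 by (auto simp: I5_mem free_def)
  then have "(i, n) \<in> idx N d" "(i-1, n-1) \<in> idx N d" using free_idx by auto
  then show ?thesis using I5 by (intro exI[of _ "ind (i, n) - ind (i-1, n-1)"] exI[of _ 0]) (simp add: phi_adiff phi_ind)
next
  case I6
  have "(d, d) \<in> idx N d" using d2 dN by (simp add: idx_def)
  then show ?thesis using I6 by (intro exI[of _ "- ind (d, d)"] exI[of _ 0]) (simp add: phi_aneg phi_ind)
next
  case I7
  have "(1, N - d) \<in> idx N d" using d2 dN by (simp add: idx_def)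
  then show ?thesis using I7 by (intro exI[of _ "ind (1, N - d)"] exI[of _ "real N"]) (simp add: phi_ind)
qed

lemma Fl_face: "l \<in> ineq_idx N d \<Longrightarrow> mat_face_of N d (Fl N d l) (Lambda N d)"
proof -
  assume l: "l \<in> ineq_idx N d"
  obtain a \<beta> where ab: "\<forall>x. phi N d a x = \<beta> - slk N d l x" using face_fun[OF l] by blast
  have valid: "\<forall>x\<in>Lambda N d. phi N d a x \<le> \<beta>"
    using ab l by (auto simp: Lam_eq reduced_iff)
  have eq: "Fl N d l = {x \<in> Lambda N d. phi N d a x = \<beta>}"
    using ab by (auto simp: Fl_def tight_slk)
  show ?thesis unfolding mat_face_of_def phi_def[symmetric]
    using valid eq by blast
qed

end


context setting begin

lemma ineq_idx_finite: "finite (ineq_idx N d)"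
proof -
  have "ineq_idx N d \<subseteq> (\<lambda>(i,n). I4 i n) ` ({0..d} \<times> {0..N}) \<union> (\<lambda>(i,n). I5 i n) ` ({0..d} \<times> {0..N})
      \<union> {I6, I7}"
    by (auto simp: ineq_idx_def)
  then show ?thesis by (rule finite_subset) auto
qed

lemma A_avg:
  assumes I: "finite I" "I \<noteq> {}" and X: "\<forall>j\<in>I. X j \<in> Aset N d"
  shows "(\<lambda>i n. (\<Sum>j\<in>I. X j i n) / real (card I)) \<in> Aset N d"
proof -
  have cI: "0 < real (card I)" using I by (simp add: card_gt_0_iff)
  show ?thesis
  proof (rule A_I)
    show "(\<lambda>i n. (\<Sum>j\<in>I. X j i n) / real (card I)) \<in> mat_space N d"
      using X A_ms by (auto simp: mat_space_def intro!: sum.neutral)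
    show "(\<Sum>j\<in>I. X j i n) / real (card I) = 0" if "1 \<le> i" "i \<le> d" "n \<le> N" "n < i" for i n
      using X A_E1[OF _ that] by (auto intro!: sum.neutral)
    show "(\<Sum>j\<in>I. X j i n) / real (card I) = real N" if "1 \<le> i" "i \<le> d" "n \<le> N" "i + N < n + d + 1" for i n
    proof -
      have "(\<Sum>j\<in>I. X j i n) = (\<Sum>j\<in>I. real N)" by (rule sum.cong) (use X A_E2[OF _ that] in auto)
      then show ?thesis using cI by simp
    qed
    show "(\<Sum>i=1..d. (\<Sum>j\<in>I. X j i n) / real (card I)) = real d * real n" if "0 < n" "n < N" for n
    proof -
      have "(\<Sum>i=1..d. (\<Sum>j\<in>I. X j i n) / real (card I)) = (\<Sum>j\<in>I. \<Sum>i=1..d. X j i n) / real (card I)"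
        by (simp add: sum_divide_distrib[symmetric] sum.swap[of _ I])
      also have "\<dots> = (\<Sum>j\<in>I. real d * real n) / real (card I)"
        using X A_E3[OF _ that] by simp
      also have "\<dots> = real d * real n" using cI by simp
      finally show ?thesis .
    qed
  qed
qed

lemma slk_avg:
  assumes I: "finite I" "I \<noteq> {}"
  shows "slk N d l (\<lambda>i n. (\<Sum>j\<in>I. X j i n) / real (card I)) = (\<Sum>j\<in>I. slk N d l (X j)) / real (card I)"
proof -
  have cI: "0 < real (card I)" using I by (simp add: card_gt_0_iff)
  show ?thesis
  proof (cases l)
    case I7
    have "(\<Sum>j\<in>I. real N - X j 1 (N - d)) = real (card I) * real N - (\<Sum>j\<in>I. X j 1 (N - d))"
      by (simp add: sum_subtractf)
    then show ?thesis using I7 cI by (simp add: field_simps)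
  qed (auto simp: diff_divide_distrib sum_subtractf)
qed

lemma phi_avg:
  assumes I: "finite I" "I \<noteq> {}"
  shows "phi N d a (\<lambda>i n. (\<Sum>j\<in>I. X j i n) / real (card I)) = (\<Sum>j\<in>I. phi N d a (X j)) / real (card I)"
  unfolding phi_def by (simp add: split_def sum_divide_distrib[symmetric] sum_distrib_left sum.swap[of _ I] mult.assoc)

lemma surj:
  assumes B0: "basis0 B0" and fac: "mat_facet_of N d F (Lambda N d)"
  shows "\<exists>l\<in>ineq_idx N d. F = Fl N d l"
proof -
  obtain a \<beta> where valid: "\<forall>x\<in>Lambda N d. phi N d a x \<le> \<beta>" and Feq: "F = {x\<in>Lambda N d. phi N d a x = \<beta>}"
    using fac unfolding mat_facet_of_def mat_face_of_def phi_def[symmetric] by blast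
  have Fne: "F \<noteq> {}" and Fdim: "mat_aff_dim F = mat_aff_dim (Lambda N d) - 1"
    using fac unfolding mat_facet_of_def by auto
  have dL: "mat_aff_dim (Lambda N d) = int (card B0)" by (rule dimL[OF B0])
  have LA: "x \<in> Aset N d" if "x \<in> Lambda N d" for x using that Lam_eq red_A by auto
  have Lslk: "0 \<le> slk N d l x" if "x \<in> Lambda N d" "l \<in> ineq_idx N d" for x l
    using that Lam_eq red_slk by auto
  have inL: "x \<in> Lambda N d" if "x \<in> Aset N d" "\<forall>l\<in>ineq_idx N d. 0 \<le> slk N d l x" for x
    using that by (simp add: Lam_eq reduced_iff)
  obtain y where y: "y \<in> Lambda N d" "phi N d a y < \<beta>"
  proof -
    have "\<exists>y\<in>Lambda N d. phi N d a y < \<beta>"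
    proof (rule ccontr)
      assume "\<not> ?thesis"
      then have "F = Lambda N d" using valid Feq by force
      then show False using Fdim by simp
    qed
    then show ?thesis using that by blast
  qed
  let ?I = "ineq_idx N d"
  have finI: "finite ?I" by (rule ineq_idx_finite)
  have neI: "?I \<noteq> {}" using I6_mem by blast
  have "\<exists>l\<in>?I. \<forall>x\<in>F. slk N d l x = 0"
  proof (rule ccontr)
    assume "\<not> ?thesis"
    then have "\<forall>l\<in>?I. \<exists>x\<in>F. slk N d l x \<noteq> 0" by blast
    then obtain X where X: "\<forall>l\<in>?I. X l \<in> F \<and> slk N d l (X l) \<noteq> 0" by metis
    have XL: "\<forall>j\<in>?I. X j \<in> Lambda N d" using X Feq by blast
    have XA: "\<forall>j\<in>?I. X j \<in> Aset N d" using XL LA by blast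
    define xa where "xa = (\<lambda>i n. (\<Sum>j\<in>?I. X j i n) / real (card ?I))"
    have cI: "0 < real (card ?I)" using finI neI by (simp add: card_gt_0_iff)
    have xaA: "xa \<in> Aset N d" unfolding xa_def by (rule A_avg[OF finI neI XA])
    have spos: "0 < slk N d l xa" if l: "l \<in> ?I" for l
    proof -
      have "slk N d l xa = (\<Sum>j\<in>?I. slk N d l (X j)) / real (card ?I)"
        unfolding xa_def by (rule slk_avg[OF finI neI])
      moreover have "slk N d l (X l) \<le> (\<Sum>j\<in>?I. slk N d l (X j))"
        by (rule member_le_sum[OF l]) (use XL Lslk l finI in auto)
      moreover have "0 < slk N d l (X l)" using X XL Lslk l by (metis order_le_less)
      ultimately show ?thesis using cI by simp
    qed
    have phixa: "phi N d a xa = \<beta>"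
    proof -
      have "phi N d a xa = (\<Sum>j\<in>?I. phi N d a (X j)) / real (card ?I)"
        unfolding xa_def by (rule phi_avg[OF finI neI])
      also have "\<dots> = (\<Sum>j\<in>?I. \<beta>) / real (card ?I)"
        using X Feq by (intro arg_cong[where f="\<lambda>s. s / real (card ?I)"] sum.cong) auto
      also have "\<dots> = \<beta>" using cI by simp
      finally show ?thesis .
    qed
    obtain t where t: "0 < t" "\<forall>l\<in>?I. 0 \<le> (1 + t) * slk N d l xa - t * slk N d l y"
      using eps_pos[OF finI, of "\<lambda>l. slk N d l xa" "\<lambda>l. slk N d l y"] spos by blast
    define z where "z = (\<lambda>i n. (1 + t) * xa i n - t * y i n)"
    have zA: "z \<in> Aset N d" unfolding z_def by (rule A_comb[OF xaA LA[OF y(1)]])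
    have "\<forall>l\<in>?I. 0 \<le> slk N d l z" using t(2) unfolding z_def slk_comb by blast
    then have zL: "z \<in> Lambda N d" using inL zA by blast
    have "phi N d a z = (1 + t) * \<beta> - t * phi N d a y" unfolding z_def phi_comb phixa ..
    also have "\<dots> > \<beta>" using t(1) y(2) by (simp add: algebra_simps)
    finally show False using valid zL by force
  qed
  then obtain l where l: "l \<in> ?I" and Fl0: "\<forall>x\<in>F. slk N d l x = 0" by blast
  have FsubFl: "F \<subseteq> Fl N d l" using Fl0 Feq by (auto simp: Fl_def tight_slk)
  obtain q where q: "q \<in> Aset N d" "slk N d l q = 0" "\<forall>l'\<in>?I. l' \<noteq> l \<longrightarrow> 1/2 \<le> slk N d l' q"
    using q_exists[OF l] by blast
  have qF: "q \<in> Fl N d l" using q_Fl[OF q] .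
  show ?thesis
  proof (cases "phi N d a q = \<beta>")
    case True
    have "Fl N d l \<subseteq> F"
    proof
      fix x assume x: "x \<in> Fl N d l"
      have xp: "x \<in> Aset N d" "slk N d l x = 0" "x \<in> Lambda N d" using Fl_prop[OF x] by auto
      have fin': "finite (?I - {l})" using finI by simp
      have qpos: "\<forall>l'\<in>?I - {l}. 0 < slk N d l' q"
      proof
        fix l' assume "l' \<in> ?I - {l}"
        then have "1/2 \<le> slk N d l' q" using q(3) by blast
        then show "0 < slk N d l' q" by linarith
      qed
      obtain t where t: "0 < t" "\<forall>l'\<in>?I - {l}. 0 \<le> (1 + t) * slk N d l' q - t * slk N d l' x"
        using eps_pos[OF fin' qpos, of "\<lambda>l'. slk N d l' x"] by blast
      define z where "z = (\<lambda>i n. (1 + t) * q i n - t * x i n)"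
      have zA: "z \<in> Aset N d" unfolding z_def by (rule A_comb[OF q(1) xp(1)])
      have "\<forall>l'\<in>?I. 0 \<le> slk N d l' z"
      proof
        fix l' assume l': "l' \<in> ?I"
        show "0 \<le> slk N d l' z"
        proof (cases "l' = l")
          case True then show ?thesis using q(2) xp(2) unfolding z_def slk_comb by simp
        next
          case False then show ?thesis using t(2) l' unfolding z_def slk_comb by blast
        qed
      qed
      then have zL: "z \<in> Lambda N d" using inL zA by blast
      have "phi N d a z = (1 + t) * \<beta> - t * phi N d a x" unfolding z_def phi_comb True ..
      then have "(1 + t) * \<beta> - t * phi N d a x \<le> \<beta>" using valid zL by force
      then have "\<beta> \<le> phi N d a x" using t(1) by (simp add: algebra_simps)
      moreover have "phi N d a x \<le> \<beta>" using valid xp(3) by blast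
      ultimately show "x \<in> F" using Feq xp(3) by simp
    qed
    then show ?thesis using FsubFl l by blast
  next
    case False
    obtain f0 where f0: "f0 \<in> F" using Fne by blast
    have f0F: "f0 \<in> Fl N d l" using f0 FsubFl by blast
    have f0p: "f0 \<in> Aset N d" "slk N d l f0 = 0" "phi N d a f0 = \<beta>"
      using Fl_prop[OF f0F] f0 Feq by simp_all
    obtain Bl where Bl: "Bl \<subseteq> W0 N d \<inter> {v. slin N d l v = 0}" "mv.independent Bl"
      "W0 N d \<inter> {v. slin N d l v = 0} \<subseteq> mv.span Bl" "finite Bl" "card Bl + 1 = card B0"
      using Ul_exists[OF B0 q(1,2) l] by blast
    have uz: "q - f0 \<in> W0 N d \<inter> {v. slin N d l v = 0}"
      using A_W0[OF q(1) f0p(1)] slk_diff[of N d l q f0] q(2) f0p(2) by simp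
    have nz: "phi N d a (q - f0) \<noteq> 0" using False f0p(3) by (simp add: phi_diff)
    have pa: "\<And>x y. phi N d a (x + y) = phi N d a x + phi N d a y" by (rule phi_add)
    have ps: "\<And>c x. phi N d a (sc c x) = c * phi N d a x" by (rule phi_sc)
    obtain B' where B': "B' \<subseteq> W0 N d \<inter> {v. slin N d l v = 0} \<inter> {v. phi N d a v = 0}" "mv.independent B'"
      "W0 N d \<inter> {v. slin N d l v = 0} \<inter> {v. phi N d a v = 0} \<subseteq> mv.span B'" "finite B'" "card B' + 1 = card Bl"
      by (rule ker_basis[where phi="phi N d a" and uz="q - f0", OF Ul_sub Bl(1-4) pa ps uz nz])
    have "\<forall>x\<in>F. x - f0 \<in> mv.span B'"
    proof
      fix x assume x: "x \<in> F"
      have xF: "x \<in> Fl N d l" using x FsubFl by blast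
      have xp: "x \<in> Aset N d" "slk N d l x = 0" "phi N d a x = \<beta>" using Fl_prop[OF xF] x Feq by simp_all
      have "x - f0 \<in> W0 N d \<inter> {v. slin N d l v = 0} \<inter> {v. phi N d a v = 0}"
        using A_W0[OF xp(1) f0p(1)] slk_diff[of N d l x f0] xp f0p by (simp add: phi_diff)
      then show "x - f0 \<in> mv.span B'" using B'(3) by blast
    qed
    then have "mat_aff_dim F \<le> int (card B')" using aff_dim_le[OF B'(4) _ Fne] by blast
    then show ?thesis using Fdim dL B'(5) Bl(5) by simp
  qed
qed

lemma facets_bij:
  "bij_betw (\<lambda>l. {x \<in> Lambda N d. ineq_tight N d l x}) (ineq_idx N d) {F. mat_facet_of N d F (Lambda N d)}"
proof -
  obtain B0 where B0: "basis0 B0" using basis_exists by blast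
  have f: "(\<lambda>l. {x \<in> Lambda N d. ineq_tight N d l x}) = Fl N d" by (simp add: fun_eq_iff Fl_def)
  have qex: "\<exists>q. q \<in> Fl N d l \<and> (\<forall>l'\<in>ineq_idx N d. l' \<noteq> l \<longrightarrow> 1/2 \<le> slk N d l' q)"
    if "l \<in> ineq_idx N d" for l
    using q_exists[OF that] q_Fl by blast
  have inj: "inj_on (Fl N d) (ineq_idx N d)"
  proof (rule inj_onI)
    fix l1 l2 assume l: "l1 \<in> ineq_idx N d" "l2 \<in> ineq_idx N d" and eq: "Fl N d l1 = Fl N d l2"
    obtain q where q: "q \<in> Fl N d l1" "\<forall>l'\<in>ineq_idx N d. l' \<noteq> l1 \<longrightarrow> 1/2 \<le> slk N d l' q"
      using qex[OF l(1)] by blast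
    have "slk N d l2 q = 0" using q(1) eq Fl_prop by auto
    then show "l1 = l2" using q(2) l(2) by force
  qed
  have img: "Fl N d ` ineq_idx N d = {F. mat_facet_of N d F (Lambda N d)}"
  proof
    show "Fl N d ` ineq_idx N d \<subseteq> {F. mat_facet_of N d F (Lambda N d)}"
    proof
      fix F assume "F \<in> Fl N d ` ineq_idx N d"
      then obtain l where l: "l \<in> ineq_idx N d" "F = Fl N d l" by blast
      have "F \<noteq> {}" using qex[OF l(1)] l(2) by blast
      moreover have "mat_aff_dim F = mat_aff_dim (Lambda N d) - 1"
        using dimF[OF B0 l(1)] dimL[OF B0] l(2) by simp
      ultimately show "F \<in> {F. mat_facet_of N d F (Lambda N d)}"
        using Fl_face[OF l(1)] l(2) by (simp add: mat_facet_of_def)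
    qed
    show "{F. mat_facet_of N d F (Lambda N d)} \<subseteq> Fl N d ` ineq_idx N d"
      using surj[OF B0] by blast
  qed
  show ?thesis unfolding f bij_betw_def using inj img by blast
qed

end

theorem mainTheorem9:
  fixes N d :: nat
  assumes "5 \<le> N" and "2 \<le> d" and "d \<le> N - 2"
  shows "Lambda N d = reduced_system N d
    \<and> eqs_lin_indep N d
    \<and> mat_affine_hull (Lambda N d) =
           {x \<in> mat_space N d. \<forall>e\<in>eq_idx N d. eq_holds N d e x}
    \<and> (\<forall>l\<in>ineq_idx N d. \<exists>x\<in>mat_space N d.
           (\<forall>e\<in>eq_idx N d. eq_holds N d e x)
         \<and> (\<forall>l'\<in>ineq_idx N d - {l}. ineq_holds N d l' x)
         \<and> \<not> ineq_holds N d l x)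
    \<and> bij_betw (\<lambda>l. {x \<in> Lambda N d. ineq_tight N d l x})
           (ineq_idx N d) {F. mat_facet_of N d F (Lambda N d)}"
proof -
  interpret setting N d using assms by unfold_locales
  show ?thesis using Lam_eq lin_indep aff_hull irred facets_bij by blast
qed

end
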